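(* Let $\Omega\subset S^{n-1}$ be a closed set not contained in any closed hemisphere of $S^{n-1}$, and let $\rho_0:\Omega\rightarrow(0,\infty)$ and $f:\Omega\rightarrow\mathbb{R}$ be continuous. Let $\langle\rho_t\rangle$ be a logarithmic family of convex hulls generated by $(\rho_0,f)$, and let $q\neq0$, $j\neq n$. Then for every $Q\in\mathcal{S}_o^n$, $$\lim_{t\rightarrow0}\frac{\widetilde{W}_{q,j}(\langle\rho_t\rangle^\ast,Q)-\widetilde{W}_{q,j}(\langle\rho_0\rangle^\ast,Q)}{t}=-q\int_{\Omega}f(u)\,d\widetilde{\mathcal{C}}_{q,j}(\langle\rho_0\rangle^\ast,Q,u).$$
   Context: $\mathcal{K}_o^n$: convex bodies in $\mathbb{R}^n$ containing the origin in their interiors; $\mathcal{S}_o^n$: compact sets star-shaped about the origin with positive continuous radial function $\rho_Q(x)=\max\{\lambda\ge0:\lambda x\in Q\}$. $h_M$ is the support function, $du$ spherical Lebesgue measure. A logarithmic family of convex hulls generated by $(\rho_0,f)$: for some $\delta>0$ and each $t\in(-\delta,\delta)$, $\rho_t:\Omega\to(0,\infty)$ is continuous with $\log\rho_t(u)=\log\rho_0(u)+tf(u)+o(t,u)$, where $o(t,\cdot)$ is continuous on $\Omega$ and $o(t,\cdot)/t\to0$ uniformly on $\Omega$ as $t\to0$; and $\langle\rho_t\rangle=\mathrm{conv}\{\rho_t(u)u:u\in\Omega\}$. $K^*=\{x: x\cdot y\le1\ \forall y\in K\}$ is the polar body. For $q\in\mathbb{R}$, $j\ne n$, $M\in\mathcal{K}_o^n$,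 $Q\in\mathcal{S}_o^n$: $\widetilde{W}_{q,j}(M,Q)=\frac1n\int_{S^{n-1}}\rho_M^q\rho_Q^{n-q-j}\,du$; $R^*_M(\eta)=\{u\in S^{n-1}:\rho_M(u)u\cdot v=h_M(v)\text{ for some }v\in\eta\}$ for Borel $\eta\subseteq S^{n-1}$; and $\widetilde{\mathcal{C}}_{q,j}(M,Q,\eta)=\frac1n\int_{R^*_M(\eta)}\rho_M^q(u)\rho_Q^{n-q-j}(u)\,du$. *)

theory Defs
  imports "HOL-Analysis.Analysis"
begin

text \<open>Spherical Lebesgue measure on the unit sphere of a Euclidean space of dimension
  n = DIM('a), defined via the cone measure: sigma(A) = n * vol{r u : u in A, 0 < r < 1}.\<close>
definition sphere_measure :: "'a::euclidean_space measure" where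
  "sphere_measure =
     density (distr (restrict_space lborel (ball 0 1 - {0}))
                    (restrict_space borel (sphere 0 1)) (\<lambda>x. x /\<^sub>R norm x))
             (\<lambda>_. ennreal (real DIM('a)))"

definition support_fun :: "'a::euclidean_space set \<Rightarrow> 'a \<Rightarrow> real" where
  "support_fun M v = Sup ((\<lambda>x. x \<bullet> v) ` M)"

definition radial_fun :: "'a::euclidean_space set \<Rightarrow> 'a \<Rightarrow> real" where
  "radial_fun Q x = Sup {s::real. s \<ge> 0 \<and> s *\<^sub>R x \<in> Q}"

definition convex_body_o :: "'a::euclidean_space set \<Rightarrow> bool" where
  "convex_body_o K \<longleftrightarrow> convex K \<and> compact K \<and> 0 \<in> interior K"

definition star_body_o :: "'a::euclidean_space set \<Rightarrow> bool" where
  "star_body_o Q \<longleftrightarrow> compact Q \<and> (\<forall>x\<in>Q. \<forall>s::real. 0 \<le> s \<and> s \<le> 1 \<longrightarrow> s *\<^sub>R x \<in> Q)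
     \<and> (\<forall>u\<in>sphere 0 1. radial_fun Q u > 0) \<and> continuous_on (sphere 0 1) (radial_fun Q)"

definition polar_body :: "'a::euclidean_space set \<Rightarrow> 'a set" where
  "polar_body K = {x. \<forall>y\<in>K. x \<bullet> y \<le> 1}"

definition conv_hull_gen :: "'a::euclidean_space set \<Rightarrow> ('a \<Rightarrow> real) \<Rightarrow> 'a set" where
  "conv_hull_gen \<Omega> \<rho> = convex hull ((\<lambda>u. \<rho> u *\<^sub>R u) ` \<Omega>)"

definition log_family :: "'a::euclidean_space set \<Rightarrow> ('a \<Rightarrow> real) \<Rightarrow> ('a \<Rightarrow> real)
    \<Rightarrow> (real \<Rightarrow> 'a \<Rightarrow> real) \<Rightarrow> bool" where
  "log_family \<Omega> \<rho>0 f \<rho> \<longleftrightarrow>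
     (\<exists>\<delta>>0.
        (\<forall>t. \<bar>t\<bar> < \<delta> \<longrightarrow> continuous_on \<Omega> (\<rho> t) \<and> (\<forall>u\<in>\<Omega>. \<rho> t u > 0)) \<and>
        (\<forall>u\<in>\<Omega>. \<rho> 0 u = \<rho>0 u) \<and>
        (\<forall>\<epsilon>>0. \<exists>d>0. \<forall>t. t \<noteq> 0 \<and> \<bar>t\<bar> < d \<longrightarrow>
            (\<forall>u\<in>\<Omega>. \<bar>(ln (\<rho> t u) - ln (\<rho>0 u) - t * f u) / t\<bar> \<le> \<epsilon>)))"

definition dual_W :: "real \<Rightarrow> real \<Rightarrow> 'a::euclidean_space set \<Rightarrow> 'a set \<Rightarrow> real" where
  "dual_W q j M Q = (1 / real DIM('a)) *
     integral\<^sup>L sphere_measure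
       (\<lambda>u. radial_fun M u powr q * radial_fun Q u powr (real DIM('a) - q - j))"

definition rev_radial_gauss :: "'a::euclidean_space set \<Rightarrow> 'a set \<Rightarrow> 'a set" where
  "rev_radial_gauss M \<eta> = {u \<in> sphere 0 1.
      \<exists>v\<in>\<eta>. (radial_fun M u *\<^sub>R u) \<bullet> v = support_fun M v}"

definition dual_curv_measure :: "real \<Rightarrow> real \<Rightarrow> 'a::euclidean_space set \<Rightarrow> 'a set \<Rightarrow> 'a measure" where
  "dual_curv_measure q j M Q =
     measure_of (sphere 0 1) (sets (restrict_space borel (sphere 0 1)))
       (\<lambda>\<eta>. ennreal ((1 / real DIM('a)) *
          (LINT u : rev_radial_gauss M \<eta> | completion sphere_measure.
             radial_fun M u powr q * radial_fun Q u powr (real DIM('a) - q - j))))"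

end

theory Submission
  imports Defs
begin


definition gmax :: "'a::euclidean_space set \<Rightarrow> ('a \<Rightarrow> real) \<Rightarrow> 'a \<Rightarrow> real" where
  "gmax \<Omega> r y = Sup ((\<lambda>u. r u * (u \<bullet> y)) ` \<Omega>)"

locale gm =
  fixes \<Omega> :: "'a::euclidean_space set" and r :: "'a \<Rightarrow> real"
  assumes cpt: "compact \<Omega>" and sub: "\<Omega> \<subseteq> sphere 0 1"
    and cont: "continuous_on \<Omega> r" and rpos: "\<forall>u\<in>\<Omega>. r u > 0"
    and hemi: "\<not> (\<exists>v\<in>sphere 0 1. \<forall>u\<in>\<Omega>. u \<bullet> v \<ge> 0)"
begin

lemma ne: "\<Omega> \<noteq> {}"
proof
  assume "\<Omega> = {}"
  moreover obtain b :: 'a where "b \<in> Basis" using nonempty_Basis by blast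
  moreover have "b \<in> sphere 0 1" using \<open>b \<in> Basis\<close> by simp
  ultimately show False using hemi by blast
qed

lemma unit: "u \<in> \<Omega> \<Longrightarrow> norm u = 1" using sub by auto

definition R where "R = Sup (r ` \<Omega>)"

lemma r_le_R: "u \<in> \<Omega> \<Longrightarrow> r u \<le> R"
  unfolding R_def
  by (intro cSup_upper imageI) (auto intro!: bounded_imp_bdd_above compact_imp_bounded compact_continuous_image cont cpt)

lemma R_pos: "R > 0"
  using ne rpos r_le_R by force

lemma phi_cont: "continuous_on \<Omega> (\<lambda>u. r u * (u \<bullet> y))"
  by (intro continuous_intros cont)

lemma bdd: "bdd_above ((\<lambda>u. r u * (u \<bullet> y)) ` \<Omega>)"
  by (intro bounded_imp_bdd_above compact_imp_bounded compact_continuous_image phi_cont cpt)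

lemma upper: "u \<in> \<Omega> \<Longrightarrow> r u * (u \<bullet> y) \<le> gmax \<Omega> r y"
  unfolding gmax_def by (intro cSup_upper imageI bdd)

lemma attains: "\<exists>u\<in>\<Omega>. gmax \<Omega> r y = r u * (u \<bullet> y)"
proof -
  obtain u where u: "u \<in> \<Omega>" "\<And>x. x \<in> \<Omega> \<Longrightarrow> r x * (x \<bullet> y) \<le> r u * (u \<bullet> y)"
    using continuous_attains_sup[OF cpt ne phi_cont] by blast
  have "gmax \<Omega> r y = r u * (u \<bullet> y)"
    unfolding gmax_def using u by (intro cSup_eq_maximum) auto
  with u show ?thesis by blast
qed

lemma gmax_le_iff: "gmax \<Omega> r y \<le> c \<longleftrightarrow> (\<forall>u\<in>\<Omega>. r u * (u \<bullet> y) \<le> c)"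
  using attains[of y] upper[of _ y] by (metis order_trans)

lemma gmax_bound: "\<bar>gmax \<Omega> r y\<bar> \<le> R * norm y"
proof -
  have b: "\<bar>r u * (u \<bullet> y)\<bar> \<le> R * norm y" if "u \<in> \<Omega>" for u
  proof -
    have "\<bar>u \<bullet> y\<bar> \<le> norm y" using Cauchy_Schwarz_ineq2[of u y] unit[OF that] by simp
    moreover have "0 < r u" "r u \<le> R" using rpos r_le_R that by auto
    ultimately show ?thesis by (simp add: abs_mult mult_mono)
  qed
  obtain u where "u \<in> \<Omega>" "gmax \<Omega> r y = r u * (u \<bullet> y)" using attains by blast
  with b show ?thesis by metis
qed

lemma gmax_lip: "\<bar>gmax \<Omega> r y - gmax \<Omega> r z\<bar> \<le> R * norm (y - z)"
proof -
  have *: "gmax \<Omega> r y - gmax \<Omega> r z \<le> R * norm (y - z)" for y z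
  proof -
    obtain u where u: "u \<in> \<Omega>" "gmax \<Omega> r y = r u * (u \<bullet> y)" using attains by blast
    have "r u * (u \<bullet> z) \<le> gmax \<Omega> r z" using upper u by auto
    moreover have "r u * (u \<bullet> y) - r u * (u \<bullet> z) = r u * (u \<bullet> (y - z))" by (simp add: algebra_simps inner_diff_right)
    moreover have "\<bar>r u * (u \<bullet> (y - z))\<bar> \<le> R * norm (y - z)"
    proof -
      have "\<bar>u \<bullet> (y - z)\<bar> \<le> norm (y - z)" using Cauchy_Schwarz_ineq2[of u "y - z"] unit[OF u(1)] by simp
      moreover have "0 < r u" "r u \<le> R" using rpos r_le_R u by auto
      ultimately show ?thesis by (simp add: abs_mult mult_mono)
    qed
    ultimately show ?thesis using u by linarith
  qed
  from *[of y z] *[of z y] show ?thesis by (simp add: norm_minus_commute abs_le_iff)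
qed

lemma gmax_cont: "continuous_on UNIV (gmax \<Omega> r)"
proof (rule continuous_onI)
  fix x e assume e: "(0::real) < e"
  show "\<exists>d>0. \<forall>x'\<in>UNIV. dist x' x < d \<longrightarrow> dist (gmax \<Omega> r x') (gmax \<Omega> r x) \<le> e"
  proof (intro exI[of _ "e / R"] conjI ballI impI)
    show "0 < e / R" using e R_pos by simp
    fix x' assume "dist x' x < e / R"
    then have "R * norm (x' - x) \<le> e" using R_pos by (simp add: dist_norm field_simps)
    then show "dist (gmax \<Omega> r x') (gmax \<Omega> r x) \<le> e"
      using gmax_lip[of x' x] by (simp add: dist_real_def)
  qed
qed

lemma gmax_homog: "c \<ge> 0 \<Longrightarrow> gmax \<Omega> r (c *\<^sub>R y) = c * gmax \<Omega> r y"
proof -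
  assume c: "c \<ge> 0"
  obtain u where u: "u \<in> \<Omega>" "gmax \<Omega> r y = r u * (u \<bullet> y)" using attains by blast
  obtain w where w: "w \<in> \<Omega>" "gmax \<Omega> r (c *\<^sub>R y) = r w * (w \<bullet> (c *\<^sub>R y))" using attains by blast
  have "r w * (w \<bullet> y) \<le> r u * (u \<bullet> y)" using upper[OF w(1), of y] u(2) by simp
  then have "c * (r w * (w \<bullet> y)) \<le> c * (r u * (u \<bullet> y))" using c by (simp add: mult_left_mono)
  moreover have "r u * (u \<bullet> (c *\<^sub>R y)) \<le> r w * (w \<bullet> (c *\<^sub>R y))" using upper[OF u(1), of "c *\<^sub>R y"] w(2) by linarith
  moreover have "r w * (w \<bullet> (c *\<^sub>R y)) = c * (r w * (w \<bullet> y))"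
    "r u * (u \<bullet> (c *\<^sub>R y)) = c * (r u * (u \<bullet> y))" by (simp_all add: algebra_simps)
  moreover have "c * gmax \<Omega> r y = c * (r u * (u \<bullet> y))" using u(2) by simp
  ultimately show ?thesis using w(2) by linarith
qed

lemma gmax_pos: "y \<noteq> 0 \<Longrightarrow> gmax \<Omega> r y > 0"
proof -
  assume y: "y \<noteq> 0"
  have "(- y /\<^sub>R norm y) \<in> sphere 0 1" using y by simp
  then obtain u where u: "u \<in> \<Omega>" "\<not> u \<bullet> (- y /\<^sub>R norm y) \<ge> 0" using hemi by blast
  then have "u \<bullet> y > 0" using y by (auto simp: not_le zero_less_mult_iff inner_minus_right)
  then have "r u * (u \<bullet> y) > 0" using rpos u by simp
  then show ?thesis using upper[OF u(1), of y] by linarith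
qed

lemma gmax_convex:
  assumes "0 \<le> a" "a \<le> 1"
  shows "gmax \<Omega> r (a *\<^sub>R x + (1 - a) *\<^sub>R y) \<le> a * gmax \<Omega> r x + (1 - a) * gmax \<Omega> r y"
proof -
  obtain u where u: "u \<in> \<Omega>" "gmax \<Omega> r (a *\<^sub>R x + (1 - a) *\<^sub>R y) = r u * (u \<bullet> (a *\<^sub>R x + (1 - a) *\<^sub>R y))"
    using attains by blast
  have "r u * (u \<bullet> (a *\<^sub>R x + (1 - a) *\<^sub>R y)) = a * (r u * (u \<bullet> x)) + (1 - a) * (r u * (u \<bullet> y))"
    by (simp add: inner_add_right algebra_simps)
  also have "\<dots> \<le> a * gmax \<Omega> r x + (1 - a) * gmax \<Omega> r y"
    using assms upper[OF u(1), of x] upper[OF u(1), of y]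
    by (intro add_mono mult_left_mono) auto
  finally show ?thesis using u by simp
qed

lemma gmax_min_sphere: "\<exists>m>0. \<forall>v\<in>sphere 0 1. m \<le> gmax \<Omega> r v"
proof -
  obtain v where v: "v \<in> sphere (0::'a) 1" "\<And>x. x \<in> sphere 0 1 \<Longrightarrow> gmax \<Omega> r v \<le> gmax \<Omega> r x"
    using continuous_attains_inf[OF compact_sphere _ continuous_on_subset[OF gmax_cont], of 0 1]
    by auto
  have "v \<noteq> 0" using v by auto
  then show ?thesis using v gmax_pos by blast
qed

lemma gmax_ge_norm: "\<exists>m>0. \<forall>y. m * norm y \<le> gmax \<Omega> r y"
proof -
  obtain m where m: "m > 0" "\<forall>v\<in>sphere 0 1. m \<le> gmax \<Omega> r v" using gmax_min_sphere by blast
  have "m * norm y \<le> gmax \<Omega> r y" for y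
  proof (cases "y = 0")
    case True then show ?thesis using gmax_homog[of 0 y] by simp
  next
    case False
    have "gmax \<Omega> r y = norm y * gmax \<Omega> r (y /\<^sub>R norm y)"
      using gmax_homog[of "norm y" "y /\<^sub>R norm y"] False by simp
    moreover have "m \<le> gmax \<Omega> r (y /\<^sub>R norm y)" using m False by simp
    ultimately show ?thesis by (metis mult.commute mult_right_mono norm_ge_zero)
  qed
  with m show ?thesis by blast
qed

end

lemma polar_hull: "polar_body (convex hull A) = polar_body A"
proof
  show "polar_body (convex hull A) \<subseteq> polar_body A"
    unfolding polar_body_def using hull_subset[of A convex] by auto
  show "polar_body A \<subseteq> polar_body (convex hull A)"
  proof
    fix x assume "x \<in> polar_body A"
    then have "A \<subseteq> {y. x \<bullet> y \<le> 1}" unfolding polar_body_def by auto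
    then have "convex hull A \<subseteq> {y. x \<bullet> y \<le> 1}"
      by (intro hull_minimal) (auto simp: convex_halfspace_le)
    then show "x \<in> polar_body (convex hull A)" unfolding polar_body_def by auto
  qed
qed

context gm begin

lemma polar_eq: "polar_body (conv_hull_gen \<Omega> r) = {x. gmax \<Omega> r x \<le> 1}"
  unfolding conv_hull_gen_def polar_hull
  by (auto simp: polar_body_def gmax_le_iff inner_commute)

lemma radial_polar:
  assumes "v \<noteq> 0"
  shows "radial_fun (polar_body (conv_hull_gen \<Omega> r)) v = 1 / gmax \<Omega> r v"
proof -
  have g: "gmax \<Omega> r v > 0" using gmax_pos assms by auto
  have "{s::real. s \<ge> 0 \<and> s *\<^sub>R v \<in> polar_body (conv_hull_gen \<Omega> r)} = {0 .. 1 / gmax \<Omega> r v}"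
    using g by (auto simp: polar_eq gmax_homog field_simps)
  then show ?thesis unfolding radial_fun_def using g by simp
qed

end


lemma sm_meas_map: "(\<lambda>x::'a::euclidean_space. x /\<^sub>R norm x) \<in> restrict_space lborel (ball 0 1 - {0}) \<rightarrow>\<^sub>M restrict_space borel (sphere 0 1)"
proof (rule measurable_restrict_space2)
  show "(\<lambda>x::'a. x /\<^sub>R norm x) \<in> space (restrict_space lborel (ball 0 1 - {0})) \<rightarrow> sphere 0 1"
    by (auto simp: space_restrict_space)
  show "(\<lambda>x::'a. x /\<^sub>R norm x) \<in> restrict_space lborel (ball 0 1 - {0}) \<rightarrow>\<^sub>M borel"
    by (rule measurable_restrict_space1) simp
qed

lemma sets_sm: "sets (sphere_measure :: 'a::euclidean_space measure) = sets (restrict_space borel (sphere 0 1))"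
  unfolding sphere_measure_def by simp

lemma space_sm: "space (sphere_measure :: 'a::euclidean_space measure) = sphere 0 1"
  unfolding sphere_measure_def by (simp add: space_restrict_space)

lemma emeasure_sm:
  assumes "B \<in> sets (sphere_measure :: 'a::euclidean_space measure)"
  shows "emeasure (sphere_measure :: 'a measure) B =
     ennreal (real DIM('a)) * emeasure lborel {x::'a \<in> ball 0 1 - {0}. x /\<^sub>R norm x \<in> B}"
proof -
  let ?D = "distr (restrict_space lborel (ball (0::'a) 1 - {0})) (restrict_space borel (sphere 0 1)) (\<lambda>x. x /\<^sub>R norm x)"
  have B: "B \<in> sets ?D" using assms by (simp add: sets_sm)
  have "emeasure (sphere_measure :: 'a measure) B = (\<integral>\<^sup>+x\<in>B. ennreal (real DIM('a)) \<partial>?D)"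
    unfolding sphere_measure_def using B by (simp add: emeasure_density)
  also have "\<dots> = ennreal (real DIM('a)) * emeasure ?D B"
    using B by (simp add: nn_integral_cmult_indicator)
  also have "emeasure ?D B = emeasure (restrict_space lborel (ball (0::'a) 1 - {0})) ((\<lambda>x. x /\<^sub>R norm x) -` B \<inter> (ball 0 1 - {0}))"
    using B by (simp add: emeasure_distr[OF sm_meas_map] space_restrict_space)
  also have "\<dots> = emeasure lborel ((\<lambda>x. x /\<^sub>R norm x) -` B \<inter> (ball 0 1 - {0}))"
  proof (rule emeasure_restrict_space)
    show "(ball (0::'a) 1 - {0}) \<inter> space lborel \<in> sets lborel" by simp
  qed auto
  also have "(\<lambda>x::'a. x /\<^sub>R norm x) -` B \<inter> (ball 0 1 - {0}) = {x::'a \<in> ball 0 1 - {0}. x /\<^sub>R norm x \<in> B}" by auto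
  finally show ?thesis .
qed

lemma finite_sm: "finite_measure (sphere_measure :: 'a::euclidean_space measure)"
proof (rule finite_measureI)
  have "sphere 0 1 \<in> sets (sphere_measure :: 'a measure)" using sets.top[of "sphere_measure :: 'a measure"] by (simp add: space_sm)
  then have "emeasure (sphere_measure :: 'a measure) (space sphere_measure) =
     ennreal (real DIM('a)) * emeasure lborel {x::'a \<in> ball 0 1 - {0}. x /\<^sub>R norm x \<in> sphere 0 1}"
    by (simp add: emeasure_sm space_sm)
  also have "\<dots> \<le> ennreal (real DIM('a)) * emeasure lborel (cball (0::'a) 1)"
    by (intro mult_left_mono emeasure_mono) auto
  also have "\<dots> < \<infinity>"
    using emeasure_lborel_cball_finite[of "0::'a" 1] by (simp add: ennreal_mult_less_top top.not_eq_extremum)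
  finally show "emeasure (sphere_measure :: 'a measure) (space sphere_measure) \<noteq> \<infinity>" by simp
qed

lemma meas_sm_cont:
  assumes "continuous_on (sphere 0 1) f"
  shows "(f :: 'a::euclidean_space \<Rightarrow> real) \<in> borel_measurable sphere_measure"
  using borel_measurable_continuous_on_restrict[OF assms]
  by (simp add: measurable_cong_sets[OF sets_sm refl])



context gm begin

definition Dp :: "'a \<Rightarrow> 'a \<Rightarrow> real" where
  "Dp b y = (INF h\<in>{h\<in>\<rat>. 0 < h}. (gmax \<Omega> r (y + h *\<^sub>R b) - gmax \<Omega> r y) / h)"
definition Dm :: "'a \<Rightarrow> 'a \<Rightarrow> real" where
  "Dm b y = - (INF h\<in>{h\<in>\<rat>. 0 < h}. (gmax \<Omega> r (y - h *\<^sub>R b) - gmax \<Omega> r y) / h)"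
definition Tb :: "'a \<Rightarrow> 'a set" where
  "Tb b = {y. Dm b y < Dp b y}"

lemma slope_bound: "h > 0 \<Longrightarrow> \<bar>(gmax \<Omega> r (y + h *\<^sub>R b) - gmax \<Omega> r y) / h\<bar> \<le> R * norm b"
proof -
  assume h: "h > 0"
  have "\<bar>gmax \<Omega> r (y + h *\<^sub>R b) - gmax \<Omega> r y\<bar> \<le> R * (h * norm b)"
    using gmax_lip[of "y + h *\<^sub>R b" y] h by simp
  then show ?thesis using h by (simp add: divide_le_eq abs_divide mult.commute mult.left_commute)
qed

lemma ne_posrat: "{h\<in>\<rat>. (0::real) < h} \<noteq> {}"
  by (auto intro!: exI[of _ 1])

lemma bdd_p: "bdd_below ((\<lambda>h. (gmax \<Omega> r (y + h *\<^sub>R b) - gmax \<Omega> r y) / h) ` {h\<in>\<rat>. 0 < h})"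
proof (rule bdd_belowI[of _ "- R * norm b"])
  fix x assume "x \<in> (\<lambda>h. (gmax \<Omega> r (y + h *\<^sub>R b) - gmax \<Omega> r y) / h) ` {h\<in>\<rat>. 0 < h}"
  then obtain h where "h > 0" "x = (gmax \<Omega> r (y + h *\<^sub>R b) - gmax \<Omega> r y) / h" by auto
  with slope_bound[of h y b] show "- R * norm b \<le> x" by (metis abs_le_iff minus_le_iff mult_minus_left)
qed

lemma bdd_m: "bdd_below ((\<lambda>h. (gmax \<Omega> r (y - h *\<^sub>R b) - gmax \<Omega> r y) / h) ` {h\<in>\<rat>. 0 < h})"
proof (rule bdd_belowI[of _ "- R * norm b"])
  fix x assume "x \<in> (\<lambda>h. (gmax \<Omega> r (y - h *\<^sub>R b) - gmax \<Omega> r y) / h) ` {h\<in>\<rat>. 0 < h}"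
  then obtain h where "h > 0" "x = (gmax \<Omega> r (y - h *\<^sub>R b) - gmax \<Omega> r y) / h" by auto
  with slope_bound[of h y "- b"] show "- R * norm b \<le> x" by (metis abs_le_iff minus_le_iff mult_minus_left norm_minus_cancel scaleR_minus_right diff_conv_add_uminus)
qed

lemma Tb_borel: "Tb b \<in> sets borel"
proof -
  have c: "continuous_on UNIV (gmax \<Omega> r)" by (rule gmax_cont)
  have "(\<lambda>y. gmax \<Omega> r (y + h *\<^sub>R b)) \<in> borel_measurable borel" for h
    by (intro borel_measurable_continuous_onI continuous_on_compose2[OF c]) (auto intro!: continuous_intros)
  moreover have "(\<lambda>y. gmax \<Omega> r (y - h *\<^sub>R b)) \<in> borel_measurable borel" for h
    by (intro borel_measurable_continuous_onI continuous_on_compose2[OF c]) (auto intro!: continuous_intros)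
  moreover have g: "gmax \<Omega> r \<in> borel_measurable borel" using c by (rule borel_measurable_continuous_onI)
  ultimately have "Dp b \<in> borel_measurable borel" "Dm b \<in> borel_measurable borel"
    unfolding Dp_def Dm_def
    by (auto intro!: borel_measurable_cINF_real countable_Collect countable_rat borel_measurable_uminus
         borel_measurable_divide borel_measurable_diff)
  then show ?thesis unfolding Tb_def using borel_measurable_less[of "Dm b" borel "Dp b"] by simp
qed

lemma subg_norm:
  assumes "\<forall>z. p \<bullet> z \<le> gmax \<Omega> r z"
  shows "norm p \<le> R"
proof -
  have "p \<bullet> p \<le> R * norm p" using assms[rule_format, of p] gmax_bound[of p] by linarith
  then have "norm p * norm p \<le> R * norm p" by (simp add: power2_norm_eq_inner[symmetric] power2_eq_square)
  then show ?thesis using R_pos by (cases "norm p = 0") auto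
qed

lemma two_subg_in_Tb:
  assumes p1: "\<forall>z. p1 \<bullet> z \<le> gmax \<Omega> r z" "p1 \<bullet> y = gmax \<Omega> r y"
    and p2: "\<forall>z. p2 \<bullet> z \<le> gmax \<Omega> r z" "p2 \<bullet> y = gmax \<Omega> r y"
    and lt: "p1 \<bullet> b < p2 \<bullet> b"
  shows "y \<in> Tb b"
proof -
  have "p2 \<bullet> b \<le> Dp b y"
    unfolding Dp_def
  proof (rule cINF_greatest[OF ne_posrat])
    fix h assume "h \<in> {h\<in>\<rat>. (0::real) < h}"
    then have h: "h > 0" by auto
    have "p2 \<bullet> (y + h *\<^sub>R b) \<le> gmax \<Omega> r (y + h *\<^sub>R b)" using p2 by auto
    then have "h * (p2 \<bullet> b) \<le> gmax \<Omega> r (y + h *\<^sub>R b) - gmax \<Omega> r y" using p2 by (simp add: inner_add_right)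
    then show "p2 \<bullet> b \<le> (gmax \<Omega> r (y + h *\<^sub>R b) - gmax \<Omega> r y) / h" using h by (simp add: le_divide_eq mult.commute)
  qed
  moreover have "Dm b y \<le> p1 \<bullet> b"
  proof -
    have "- (p1 \<bullet> b) \<le> (INF h\<in>{h\<in>\<rat>. 0 < h}. (gmax \<Omega> r (y - h *\<^sub>R b) - gmax \<Omega> r y) / h)"
    proof (rule cINF_greatest[OF ne_posrat])
      fix h assume "h \<in> {h\<in>\<rat>. (0::real) < h}"
      then have h: "h > 0" by auto
      have "p1 \<bullet> (y - h *\<^sub>R b) \<le> gmax \<Omega> r (y - h *\<^sub>R b)" using p1 by auto
      then have "h * (- (p1 \<bullet> b)) \<le> gmax \<Omega> r (y - h *\<^sub>R b) - gmax \<Omega> r y" using p1 by (simp add: inner_diff_right)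
      then show "- (p1 \<bullet> b) \<le> (gmax \<Omega> r (y - h *\<^sub>R b) - gmax \<Omega> r y) / h" using h by (simp add: le_divide_eq mult.commute)
    qed
    then show ?thesis unfolding Dm_def by linarith
  qed
  ultimately show ?thesis using lt unfolding Tb_def by simp
qed

lemma line_countable: "countable {s::real. z + s *\<^sub>R b \<in> Tb b}"
proof -
  define \<psi> where "\<psi> s = gmax \<Omega> r (z + s *\<^sub>R b)" for s
  define A where "A = {s::real. z + s *\<^sub>R b \<in> Tb b}"
  have Dp: "Dp b (z + s *\<^sub>R b) \<le> (\<psi> (s + h) - \<psi> s) / h" if "h \<in> \<rat>" "h > 0" for s h
  proof -
    have "Dp b (z + s *\<^sub>R b) \<le> (gmax \<Omega> r ((z + s *\<^sub>R b) + h *\<^sub>R b) - gmax \<Omega> r (z + s *\<^sub>R b)) / h"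
      unfolding Dp_def by (rule cINF_lower[OF bdd_p]) (use that in auto)
    then show ?thesis by (simp add: \<psi>_def scaleR_add_left add.assoc)
  qed
  have Dm: "(\<psi> s - \<psi> (s - h)) / h \<le> Dm b (z + s *\<^sub>R b)" if "h \<in> \<rat>" "h > 0" for s h
  proof -
    have "(INF h\<in>{h\<in>\<rat>. 0 < h}. (gmax \<Omega> r ((z + s *\<^sub>R b) - h *\<^sub>R b) - gmax \<Omega> r (z + s *\<^sub>R b)) / h)
       \<le> (gmax \<Omega> r ((z + s *\<^sub>R b) - h *\<^sub>R b) - gmax \<Omega> r (z + s *\<^sub>R b)) / h"
      by (rule cINF_lower[OF bdd_m]) (use that in auto)
    moreover have "(z + s *\<^sub>R b) - h *\<^sub>R b = z + (s - h) *\<^sub>R b" by (simp add: algebra_simps)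
    ultimately show ?thesis unfolding Dm_def \<psi>_def by (simp add: diff_divide_distrib)
  qed
  have conv: "\<psi> (s + h) + \<psi> (s' - h) \<le> \<psi> s + \<psi> s'" if "s < s'" "0 < h" "h \<le> (s' - s) / 2" for s s' h
  proof -
    define l where "l = h / (s' - s)"
    have l: "0 \<le> l" "l \<le> 1" using that by (auto simp: l_def field_simps)
    have e1: "z + (s + h) *\<^sub>R b = (1 - l) *\<^sub>R (z + s *\<^sub>R b) + (1 - (1 - l)) *\<^sub>R (z + s' *\<^sub>R b)"
      using that by (simp add: l_def algebra_simps) (simp add: field_simps scaleR_left_distrib[symmetric])
    have e2: "z + (s' - h) *\<^sub>R b = l *\<^sub>R (z + s *\<^sub>R b) + (1 - l) *\<^sub>R (z + s' *\<^sub>R b)"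
      using that by (simp add: l_def algebra_simps) (simp add: field_simps scaleR_left_distrib[symmetric])
    have "\<psi> (s + h) \<le> (1 - l) * \<psi> s + (1 - (1 - l)) * \<psi> s'"
      unfolding \<psi>_def e1 by (rule gmax_convex) (use l in auto)
    moreover have "\<psi> (s' - h) \<le> l * \<psi> s + (1 - l) * \<psi> s'"
      unfolding \<psi>_def e2 by (rule gmax_convex) (use l in auto)
    ultimately show ?thesis by (simp add: algebra_simps)
  qed
  have key: "Dp b (z + s *\<^sub>R b) \<le> Dm b (z + s' *\<^sub>R b)" if "s < s'" for s s'
  proof -
    have "\<exists>h\<in>\<rat>. 0 < h \<and> h < (s' - s) / 2" using Rats_dense_in_real[of 0 "(s' - s) / 2"] that by simp
    then obtain h where h: "h \<in> \<rat>" "0 < h" "h < (s' - s) / 2" by blast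
    have "(\<psi> (s + h) - \<psi> s) / h \<le> (\<psi> s' - \<psi> (s' - h)) / h"
      using conv[of s s' h] that h by (intro divide_right_mono) auto
    then show ?thesis using Dp[OF h(1,2), of s] Dm[OF h(1,2), of s'] by linarith
  qed
  have "\<forall>s\<in>A. \<exists>q\<in>\<rat>. Dm b (z + s *\<^sub>R b) < q \<and> q < Dp b (z + s *\<^sub>R b)"
    unfolding A_def Tb_def using Rats_dense_in_real by blast
  then obtain Q where Q: "\<And>s. s \<in> A \<Longrightarrow> Q s \<in> \<rat> \<and> Dm b (z + s *\<^sub>R b) < Q s \<and> Q s < Dp b (z + s *\<^sub>R b)"
    by metis
  have "inj_on Q A"
  proof (rule inj_onI)
    fix s s' assume "s \<in> A" "s' \<in> A" "Q s = Q s'"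
    show "s = s'"
    proof (rule ccontr)
      assume "s \<noteq> s'"
      then consider "s < s'" | "s' < s" by linarith
      then show False
      proof cases
        case 1 then show False using key[OF 1] Q[OF \<open>s \<in> A\<close>] Q[OF \<open>s' \<in> A\<close>] \<open>Q s = Q s'\<close> by linarith
      next
        case 2 then show False using key[OF 2] Q[OF \<open>s \<in> A\<close>] Q[OF \<open>s' \<in> A\<close>] \<open>Q s = Q s'\<close> by linarith
      qed
    qed
  qed
  moreover have "countable (Q ` A)" using Q by (intro countable_subset[OF _ countable_rat]) auto
  ultimately show ?thesis using countable_image_inj_on unfolding A_def by blast
qed

end


lemma lborel_null_lines:
  fixes T :: "'a::euclidean_space set" and b :: 'a
  assumes T: "T \<in> sets borel" and b: "b \<in> Basis" and cnt: "\<And>z. countable {s::real. z + s *\<^sub>R b \<in> T}"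
  shows "emeasure lborel T = 0"
proof -
  interpret P: product_sigma_finite "\<lambda>_::'a. lborel :: real measure"
    by (simp add: product_sigma_finite_def lborel.sigma_finite_measure_axioms)
  have meas: "(\<lambda>f. \<Sum>b\<in>Basis. f b *\<^sub>R b) \<in> measurable (\<Pi>\<^sub>M b\<in>Basis. (lborel::real measure)) (borel :: 'a measure)"
    by measurable
  have "emeasure lborel T = (\<integral>\<^sup>+x. indicator T x \<partial>(lborel::'a measure))"
    using T by simp
  also have "\<dots> = (\<integral>\<^sup>+f. indicator T (\<Sum>b\<in>Basis. f b *\<^sub>R b) \<partial>(\<Pi>\<^sub>M b\<in>Basis. (lborel::real measure)))"
    by (subst lborel_eq) (rule nn_integral_distr[OF meas], use T in simp)
  also have "\<dots> = (\<integral>\<^sup>+f. indicator T (\<Sum>b\<in>Basis. f b *\<^sub>R b) \<partial>(\<Pi>\<^sub>M b\<in>insert b (Basis - {b}). (lborel::real measure)))"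
    using b by (simp add: insert_absorb)
  also have "\<dots> = (\<integral>\<^sup>+x. (\<integral>\<^sup>+y. indicator T (\<Sum>b'\<in>Basis. (x(b := y)) b' *\<^sub>R b') \<partial>lborel) \<partial>(\<Pi>\<^sub>M b\<in>Basis - {b}. (lborel::real measure)))"
  proof (rule P.product_nn_integral_insert)
    show "(\<lambda>f. indicator T (\<Sum>b\<in>Basis. f b *\<^sub>R b)) \<in> borel_measurable (\<Pi>\<^sub>M b\<in>insert b (Basis - {b}). (lborel::real measure))"
      using b T by (simp add: insert_absorb) measurable
  qed auto
  also have "\<dots> = (\<integral>\<^sup>+x. 0 \<partial>(\<Pi>\<^sub>M b\<in>Basis - {b}. (lborel::real measure)))"
  proof (rule nn_integral_cong)
    fix x :: "'a \<Rightarrow> real"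
    define z where "z = (\<Sum>b'\<in>Basis - {b}. x b' *\<^sub>R b')"
    have eq: "(\<Sum>b'\<in>Basis. (x(b := y)) b' *\<^sub>R b') = z + y *\<^sub>R b" for y
      using b unfolding z_def by (subst sum.remove[of Basis b]) (auto intro!: sum.cong)
    have N: "{s::real. z + s *\<^sub>R b \<in> T} \<in> null_sets lborel"
      by (rule countable_imp_null_set_lborel[OF cnt])
    have "(\<integral>\<^sup>+y. indicator T (\<Sum>b'\<in>Basis. (x(b := y)) b' *\<^sub>R b') \<partial>lborel) = (\<integral>\<^sup>+y. 0 \<partial>(lborel::real measure))"
      unfolding eq
    proof (rule nn_integral_cong_AE)
      show "AE y in lborel. indicator T (z + y *\<^sub>R b) = (0::ennreal)"
        using AE_not_in[OF N] by eventually_elim (simp add: indicator_def)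
    qed
    then show "(\<integral>\<^sup>+y. indicator T (\<Sum>b'\<in>Basis. (x(b := y)) b' *\<^sub>R b') \<partial>lborel) = 0" by simp
  qed
  finally show ?thesis by simp
qed



context gm begin

definition subg :: "'a \<Rightarrow> 'a set" where
  "subg y = {p. (\<forall>z. p \<bullet> z \<le> gmax \<Omega> r z) \<and> p \<bullet> y = gmax \<Omega> r y}"

definition Nset :: "'a set" where
  "Nset = {v \<in> sphere 0 1. \<exists>p1 p2. p1 \<in> subg v \<and> p2 \<in> subg v \<and> p1 \<noteq> p2}"

lemma subg_scale: "c > 0 \<Longrightarrow> subg (c *\<^sub>R y) = subg y"
  unfolding subg_def by (auto simp: gmax_homog)

lemma two_subg_Tb:
  assumes "p1 \<in> subg y" "p2 \<in> subg y" "p1 \<noteq> p2"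
  shows "y \<in> (\<Union>b\<in>Basis. Tb b)"
proof -
  obtain b where b: "b \<in> Basis" "p1 \<bullet> b \<noteq> p2 \<bullet> b" using assms(3) euclidean_eqI by blast
  then consider "p1 \<bullet> b < p2 \<bullet> b" | "p2 \<bullet> b < p1 \<bullet> b" by linarith
  then show ?thesis
  proof cases
    case 1 then show ?thesis using two_subg_in_Tb[of p1 y p2 b] assms b unfolding subg_def by auto
  next
    case 2 then show ?thesis using two_subg_in_Tb[of p2 y p1 b] assms b unfolding subg_def by auto
  qed
qed

lemma UTb_null: "(\<Union>b\<in>Basis. Tb b) \<in> null_sets lborel"
proof (rule null_sets.finite_UN)
  fix b :: 'a assume b: "b \<in> Basis"
  show "Tb b \<in> null_sets lborel"
    using lborel_null_lines[OF Tb_borel b line_countable] Tb_borel by (simp add: null_sets_def)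
qed simp

lemma cont_gmax_comp: "continuous_on UNIV f \<Longrightarrow> continuous_on UNIV (\<lambda>z. gmax \<Omega> r (f z))"
  by (rule continuous_on_compose2[OF gmax_cont]) auto

definition K :: "nat \<Rightarrow> ('a \<times> 'a \<times> 'a) set" where
  "K k = {z. norm (fst z) = 1 \<and> norm (fst (snd z)) \<le> R \<and> norm (snd (snd z)) \<le> R
     \<and> 1 / real (Suc k) \<le> dist (fst (snd z)) (snd (snd z))
     \<and> (\<forall>w. fst (snd z) \<bullet> w \<le> gmax \<Omega> r w) \<and> (\<forall>w. snd (snd z) \<bullet> w \<le> gmax \<Omega> r w)
     \<and> fst (snd z) \<bullet> fst z = gmax \<Omega> r (fst z) \<and> snd (snd z) \<bullet> fst z = gmax \<Omega> r (fst z)}"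

lemma K_compact: "compact (K k)"
proof -
  have "closed (K k)"
    unfolding K_def
    by (intro closed_Collect_conj closed_Collect_all closed_Collect_eq closed_Collect_le
        continuous_intros cont_gmax_comp)
  moreover have "K k \<subseteq> sphere 0 1 \<times> (cball 0 R \<times> cball 0 R)"
    unfolding K_def by auto
  then have "bounded (K k)"
    by (rule bounded_subset[rotated]) (intro bounded_Times bounded_cball bounded_sphere)
  ultimately show ?thesis by (simp add: compact_eq_bounded_closed)
qed

lemma Nset_eq: "Nset = (\<Union>k. fst ` K k)"
proof
  show "Nset \<subseteq> (\<Union>k. fst ` K k)"
  proof
    fix v assume "v \<in> Nset"
    then obtain p1 p2 where p: "v \<in> sphere 0 1" "p1 \<in> subg v" "p2 \<in> subg v" "p1 \<noteq> p2"
      unfolding Nset_def by blast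
    then have "dist p1 p2 > 0" by simp
    then obtain k where k: "inverse (real (Suc k)) < dist p1 p2"
      using reals_Archimedean by blast
    have "norm p1 \<le> R" "norm p2 \<le> R" using p(2,3) subg_norm unfolding subg_def by auto
    moreover have "norm v = 1" using p(1) by simp
    ultimately have "(v, p1, p2) \<in> K k" using p(2,3) k unfolding K_def subg_def by (simp add: divide_inverse)
    then show "v \<in> (\<Union>k. fst ` K k)" by force
  qed
  show "(\<Union>k. fst ` K k) \<subseteq> Nset"
  proof
    fix v assume "v \<in> (\<Union>k. fst ` K k)"
    then obtain k p1 p2 where z: "(v, p1, p2) \<in> K k" by force
    have "0 < 1 / real (Suc k)" by simp
    moreover have "1 / real (Suc k) \<le> dist p1 p2" using z unfolding K_def by simp
    ultimately have "p1 \<noteq> p2" by auto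
    moreover have "v \<in> sphere 0 1" "p1 \<in> subg v" "p2 \<in> subg v" using z unfolding K_def subg_def by simp_all
    ultimately show "v \<in> Nset" unfolding Nset_def by blast
  qed
qed

lemma Nset_borel: "Nset \<in> sets borel"
proof -
  have "closed (fst ` K k)" for k
    by (intro compact_imp_closed compact_continuous_image K_compact continuous_on_fst continuous_on_id)
  then show ?thesis unfolding Nset_eq by (intro sets.countable_UN' borel_closed) auto
qed

lemma Nset_sphere: "Nset \<subseteq> sphere 0 1" unfolding Nset_def by auto

lemma Nset_sets_sm: "Nset \<in> sets sphere_measure"
  unfolding sets_sm using Nset_borel Nset_sphere by (simp add: sets_restrict_space_iff)

lemma Nset_null: "Nset \<in> null_sets sphere_measure"
proof -
  have "{x::'a \<in> ball 0 1 - {0}. x /\<^sub>R norm x \<in> Nset} \<subseteq> (\<Union>b\<in>Basis. Tb b)"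
  proof
    fix x assume x: "x \<in> {x::'a \<in> ball 0 1 - {0}. x /\<^sub>R norm x \<in> Nset}"
    then obtain p1 p2 where p: "p1 \<in> subg (x /\<^sub>R norm x)" "p2 \<in> subg (x /\<^sub>R norm x)" "p1 \<noteq> p2"
      unfolding Nset_def by blast
    have "subg (x /\<^sub>R norm x) = subg x" using x subg_scale[of "inverse (norm x)" x] by simp
    then show "x \<in> (\<Union>b\<in>Basis. Tb b)" using two_subg_Tb p by auto
  qed
  then have "emeasure lborel {x::'a \<in> ball 0 1 - {0}. x /\<^sub>R norm x \<in> Nset} = 0"
  proof -
    have m: "(\<lambda>x::'a. x /\<^sub>R norm x) \<in> borel_measurable borel" by measurable
    have "{x::'a \<in> ball 0 1 - {0}. x /\<^sub>R norm x \<in> Nset} = (ball 0 1 - {0}) \<inter> ((\<lambda>x::'a. x /\<^sub>R norm x) -` Nset \<inter> space borel)"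
      by auto
    also have "\<dots> \<in> sets borel"
      by (intro sets.Int measurable_sets[OF m Nset_borel]) auto
    finally have "{x::'a \<in> ball 0 1 - {0}. x /\<^sub>R norm x \<in> Nset} \<in> null_sets lborel"
      using null_sets_subset[OF UTb_null _ \<open>_ \<subseteq> _\<close>] by simp
    then show ?thesis by (simp add: null_sets_def)
  qed
  then show ?thesis using Nset_sets_sm emeasure_sm[OF Nset_sets_sm] by (simp add: null_sets_def)
qed

end


lemma ln_mono_pos: "0 < (x::real) \<Longrightarrow> x \<le> y \<Longrightarrow> ln x \<le> ln y"
  by (subst ln_le_cancel_iff) auto

locale fam =
  fixes \<Omega> :: "'a::euclidean_space set" and \<rho>0 f :: "'a \<Rightarrow> real" and \<rho> :: "real \<Rightarrow> 'a \<Rightarrow> real" and \<delta> :: real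
  assumes cpt: "compact \<Omega>" and sub: "\<Omega> \<subseteq> sphere 0 1"
    and hemi: "\<not> (\<exists>v\<in>sphere 0 1. \<forall>u\<in>\<Omega>. u \<bullet> v \<ge> 0)"
    and c0: "continuous_on \<Omega> \<rho>0" and p0: "\<forall>u\<in>\<Omega>. \<rho>0 u > 0" and cf: "continuous_on \<Omega> f"
    and dpos: "\<delta> > 0" and ct: "\<And>t. \<bar>t\<bar> < \<delta> \<Longrightarrow> continuous_on \<Omega> (\<rho> t) \<and> (\<forall>u\<in>\<Omega>. \<rho> t u > 0)"
    and r0: "\<forall>u\<in>\<Omega>. \<rho> 0 u = \<rho>0 u"
    and oo: "\<forall>\<epsilon>>0. \<exists>d>0. \<forall>t. t \<noteq> 0 \<and> \<bar>t\<bar> < d \<longrightarrow>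
            (\<forall>u\<in>\<Omega>. \<bar>(ln (\<rho> t u) - ln (\<rho>0 u) - t * f u) / t\<bar> \<le> \<epsilon>)"
begin

sublocale g0: gm \<Omega> \<rho>0
  using cpt sub hemi c0 p0 by unfold_locales auto

lemma gmt: "\<bar>t\<bar> < \<delta> \<Longrightarrow> gm \<Omega> (\<rho> t)"
  using cpt sub hemi ct by unfold_locales auto

lemma gmax_0: "gmax \<Omega> (\<rho> 0) = gmax \<Omega> \<rho>0"
  unfolding gmax_def using r0 by (intro ext arg_cong[where f=Sup] image_cong) auto

definition oe :: "real \<Rightarrow> 'a \<Rightarrow> real" where
  "oe t u = ln (\<rho> t u) - ln (\<rho>0 u) - t * f u"

lemma rho_exp: "\<bar>t\<bar> < \<delta> \<Longrightarrow> u \<in> \<Omega> \<Longrightarrow> \<rho> t u = \<rho>0 u * exp (t * f u + oe t u)"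
proof -
  assume t: "\<bar>t\<bar> < \<delta>" and u: "u \<in> \<Omega>"
  have "\<rho> t u > 0" "\<rho>0 u > 0" using ct[OF t] p0 u by auto
  then show ?thesis unfolding oe_def by (simp add: exp_diff)
qed

lemma f_bound: "\<exists>C\<ge>0. \<forall>u\<in>\<Omega>. \<bar>f u\<bar> \<le> C"
proof -
  have "bounded (f ` \<Omega>)" by (intro compact_imp_bounded compact_continuous_image cf cpt)
  then obtain C where "\<forall>x\<in>f ` \<Omega>. norm x \<le> C" unfolding bounded_iff by blast
  then show ?thesis by (intro exI[of _ "max C 0"]) auto
qed

definition Cf where "Cf = (SOME C. C \<ge> 0 \<and> (\<forall>u\<in>\<Omega>. \<bar>f u\<bar> \<le> C))"

lemma Cf: "Cf \<ge> 0" "u \<in> \<Omega> \<Longrightarrow> \<bar>f u\<bar> \<le> Cf"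
  using someI_ex[OF f_bound] unfolding Cf_def by auto

lemma lower:
  assumes t: "\<bar>t\<bar> < \<delta>" and y: "y \<noteq> 0" and u: "u \<in> \<Omega>" "gmax \<Omega> \<rho>0 y = \<rho>0 u * (u \<bullet> y)"
  shows "t * f u + oe t u \<le> ln (gmax \<Omega> (\<rho> t) y) - ln (gmax \<Omega> \<rho>0 y)"
proof -
  interpret gt: gm \<Omega> "\<rho> t" by (rule gmt[OF t])
  have G0: "gmax \<Omega> \<rho>0 y > 0" using g0.gmax_pos y by auto
  have "gmax \<Omega> \<rho>0 y * exp (t * f u + oe t u) = \<rho> t u * (u \<bullet> y)"
    using u rho_exp[OF t u(1)] by simp
  also have "\<dots> \<le> gmax \<Omega> (\<rho> t) y" by (rule gt.upper[OF u(1)])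
  finally have "ln (gmax \<Omega> \<rho>0 y * exp (t * f u + oe t u)) \<le> ln (gmax \<Omega> (\<rho> t) y)"
    using G0 by (intro ln_mono_pos) auto
  then show ?thesis using G0 by (simp add: ln_mult)
qed

lemma upper:
  assumes t: "\<bar>t\<bar> < \<delta>" and y: "y \<noteq> 0"
  shows "\<exists>u\<in>\<Omega>. ln (gmax \<Omega> (\<rho> t) y) - ln (gmax \<Omega> \<rho>0 y) \<le> t * f u + oe t u
     \<and> \<rho>0 u * (u \<bullet> y) = exp (ln (gmax \<Omega> (\<rho> t) y) - (t * f u + oe t u))"
proof -
  interpret gt: gm \<Omega> "\<rho> t" by (rule gmt[OF t])
  obtain u where u: "u \<in> \<Omega>" "gmax \<Omega> (\<rho> t) y = \<rho> t u * (u \<bullet> y)" using gt.attains by blast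
  have Gt: "gmax \<Omega> (\<rho> t) y > 0" using gt.gmax_pos y by auto
  have G0: "gmax \<Omega> \<rho>0 y > 0" using g0.gmax_pos y by auto
  have eq: "gmax \<Omega> (\<rho> t) y = \<rho>0 u * (u \<bullet> y) * exp (t * f u + oe t u)"
    using u rho_exp[OF t u(1)] by simp
  have "\<rho>0 u * (u \<bullet> y) \<le> gmax \<Omega> \<rho>0 y" by (rule g0.upper[OF u(1)])
  then have "gmax \<Omega> (\<rho> t) y \<le> gmax \<Omega> \<rho>0 y * exp (t * f u + oe t u)"
    unfolding eq by (intro mult_right_mono) auto
  then have "ln (gmax \<Omega> (\<rho> t) y) \<le> ln (gmax \<Omega> \<rho>0 y * exp (t * f u + oe t u))"
    using Gt by (intro ln_mono_pos) auto
  then have 1: "ln (gmax \<Omega> (\<rho> t) y) - ln (gmax \<Omega> \<rho>0 y) \<le> t * f u + oe t u"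
    using G0 by (simp add: ln_mult)
  have "\<rho>0 u * (u \<bullet> y) = gmax \<Omega> (\<rho> t) y / exp (t * f u + oe t u)" using eq by simp
  also have "\<dots> = exp (ln (gmax \<Omega> (\<rho> t) y) - (t * f u + oe t u))" using Gt by (simp add: exp_diff)
  finally show ?thesis using 1 u(1) by blast
qed

lemma oe_small: "\<epsilon> > 0 \<Longrightarrow> eventually (\<lambda>t. \<forall>u\<in>\<Omega>. \<bar>oe t u\<bar> \<le> \<epsilon> * \<bar>t\<bar>) (at (0::real))"
proof -
  assume e: "\<epsilon> > 0"
  obtain d where d: "d > 0" "\<And>t. t \<noteq> 0 \<Longrightarrow> \<bar>t\<bar> < d \<Longrightarrow> \<forall>u\<in>\<Omega>. \<bar>oe t u / t\<bar> \<le> \<epsilon>"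
    using oo e unfolding oe_def by blast
  show ?thesis unfolding eventually_at
  proof (intro exI[of _ d] conjI allI impI ballI)
    fix t :: real and u assume "t \<noteq> 0 \<and> dist t 0 < d" "u \<in> \<Omega>"
    then have "\<bar>oe t u / t\<bar> \<le> \<epsilon>" using d by auto
    then show "\<bar>oe t u\<bar> \<le> \<epsilon> * \<bar>t\<bar>" using \<open>t \<noteq> 0 \<and> _\<close> by (simp add: abs_divide divide_le_eq)
  qed (use d in auto)
qed

lemma ev_delta: "eventually (\<lambda>t. t \<noteq> 0 \<and> \<bar>t\<bar> < \<delta>) (at (0::real))"
  unfolding eventually_at using dpos by (intro exI[of _ \<delta>]) auto

lemma log_bound: "eventually (\<lambda>t. \<forall>y. y \<noteq> 0 \<longrightarrow>
    \<bar>ln (gmax \<Omega> (\<rho> t) y) - ln (gmax \<Omega> \<rho>0 y)\<bar> \<le> (Cf + 1) * \<bar>t\<bar>) (at 0)"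
  using oe_small[OF zero_less_one] ev_delta
proof eventually_elim
  case (elim t)
  show ?case
  proof (intro allI impI)
    fix y :: 'a assume y: "y \<noteq> 0"
    obtain u where u: "u \<in> \<Omega>" "gmax \<Omega> \<rho>0 y = \<rho>0 u * (u \<bullet> y)" using g0.attains by blast
    have l: "t * f u + oe t u \<le> ln (gmax \<Omega> (\<rho> t) y) - ln (gmax \<Omega> \<rho>0 y)"
      using lower[OF _ y u] elim by auto
    obtain w where w: "w \<in> \<Omega>" "ln (gmax \<Omega> (\<rho> t) y) - ln (gmax \<Omega> \<rho>0 y) \<le> t * f w + oe t w"
      using upper[OF _ y] elim by auto
    have "\<bar>t * f u\<bar> \<le> Cf * \<bar>t\<bar>" "\<bar>t * f w\<bar> \<le> Cf * \<bar>t\<bar>"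
      using Cf(2)[OF u(1)] Cf(2)[OF w(1)] by (auto simp: abs_mult mult.commute mult_left_mono)
    moreover have "\<bar>oe t u\<bar> \<le> \<bar>t\<bar>" "\<bar>oe t w\<bar> \<le> \<bar>t\<bar>" using elim u w by auto
    ultimately show "\<bar>ln (gmax \<Omega> (\<rho> t) y) - ln (gmax \<Omega> \<rho>0 y)\<bar> \<le> (Cf + 1) * \<bar>t\<bar>"
      using l w by (simp add: algebra_simps abs_le_iff)
  qed
qed

lemma log_deriv:
  assumes v: "v \<noteq> 0" and u0: "u0 \<in> \<Omega>" "gmax \<Omega> \<rho>0 v = \<rho>0 u0 * (u0 \<bullet> v)"
    and uniq: "\<And>u. u \<in> \<Omega> \<Longrightarrow> gmax \<Omega> \<rho>0 v = \<rho>0 u * (u \<bullet> v) \<Longrightarrow> u = u0"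
  shows "((\<lambda>t. (ln (gmax \<Omega> (\<rho> t) v) - ln (gmax \<Omega> \<rho>0 v)) / t) \<longlongrightarrow> f u0) (at 0)"
proof (rule tendstoI)
  fix \<epsilon> :: real assume e: "\<epsilon> > 0"
  define G0 where "G0 = gmax \<Omega> \<rho>0 v"
  have G0: "G0 > 0" unfolding G0_def using g0.gmax_pos v by auto
  obtain \<eta> where \<eta>: "\<eta> > 0" "\<And>u. u \<in> \<Omega> \<Longrightarrow> dist u u0 < \<eta> \<Longrightarrow> dist (f u) (f u0) < \<epsilon> / 2"
    using cf u0(1) e unfolding continuous_on_iff by (metis half_gt_zero)
  define \<Omega>' where "\<Omega>' = \<Omega> \<inter> - ball u0 \<eta>"
  have c': "compact \<Omega>'" unfolding \<Omega>'_def by (intro compact_Int_closed cpt) auto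
  obtain m' where m': "m' < G0" "\<And>u. u \<in> \<Omega>' \<Longrightarrow> \<rho>0 u * (u \<bullet> v) \<le> m'"
  proof (cases "\<Omega>' = {}")
    case True then show ?thesis using that[of 0] G0 by auto
  next
    case False
    have "continuous_on \<Omega>' (\<lambda>u. \<rho>0 u * (u \<bullet> v))"
      by (rule continuous_on_subset[OF g0.phi_cont]) (auto simp: \<Omega>'_def)
    then obtain u' where u': "u' \<in> \<Omega>'" "\<And>u. u \<in> \<Omega>' \<Longrightarrow> \<rho>0 u * (u \<bullet> v) \<le> \<rho>0 u' * (u' \<bullet> v)"
      using continuous_attains_sup[OF c' False] by blast
    have "u' \<noteq> u0" using u'(1) \<eta>(1) by (auto simp: \<Omega>'_def)
    moreover have "u' \<in> \<Omega>" using u'(1) by (auto simp: \<Omega>'_def)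
    ultimately have "\<rho>0 u' * (u' \<bullet> v) \<noteq> G0" using uniq unfolding G0_def by metis
    moreover have "\<rho>0 u' * (u' \<bullet> v) \<le> G0" unfolding G0_def by (rule g0.upper[OF \<open>u' \<in> \<Omega>\<close>])
    ultimately show ?thesis using that[of "\<rho>0 u' * (u' \<bullet> v)"] u' by fastforce
  qed
  have "((\<lambda>t::real. G0 * exp (- 2 * (Cf + 1) * \<bar>t\<bar>)) \<longlongrightarrow> G0 * exp (- 2 * (Cf + 1) * \<bar>0\<bar>)) (at 0)"
    by (intro tendsto_intros)
  then have ev1: "eventually (\<lambda>t. m' < G0 * exp (- 2 * (Cf + 1) * \<bar>t\<bar>)) (at (0::real))"
    using m'(1) by (intro order_tendstoD(1)) auto
  have e4: "min (\<epsilon> / 4) 1 > 0" using e by simp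
  show "eventually (\<lambda>t. dist ((ln (gmax \<Omega> (\<rho> t) v) - ln (gmax \<Omega> \<rho>0 v)) / t) (f u0) < \<epsilon>) (at 0)"
    using ev1 oe_small[OF e4] ev_delta
  proof eventually_elim
    case (elim t)
    define l where "l = ln (gmax \<Omega> (\<rho> t) v) - ln G0"
    have t: "t \<noteq> 0" "\<bar>t\<bar> < \<delta>" using elim by auto
    have oeb: "\<bar>oe t u\<bar> \<le> (\<epsilon> / 4) * \<bar>t\<bar>" "\<bar>oe t u\<bar> \<le> \<bar>t\<bar>" if "u \<in> \<Omega>" for u
    proof -
      have m: "min (\<epsilon> / 4) 1 * \<bar>t\<bar> \<le> (\<epsilon> / 4) * \<bar>t\<bar>" "min (\<epsilon> / 4) 1 * \<bar>t\<bar> \<le> 1 * \<bar>t\<bar>"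
        by (intro mult_right_mono; simp)+
      have "\<bar>oe t u\<bar> \<le> min (\<epsilon> / 4) 1 * \<bar>t\<bar>" using elim that by auto
      then show "\<bar>oe t u\<bar> \<le> (\<epsilon> / 4) * \<bar>t\<bar>" "\<bar>oe t u\<bar> \<le> \<bar>t\<bar>" using m by linarith+
    qed
    have l1: "t * f u0 + oe t u0 \<le> l"
      using lower[OF t(2) v u0] unfolding l_def G0_def .
    obtain w where w: "w \<in> \<Omega>" "l \<le> t * f w + oe t w"
      "\<rho>0 w * (w \<bullet> v) = exp (ln (gmax \<Omega> (\<rho> t) v) - (t * f w + oe t w))"
      using upper[OF t(2) v] unfolding l_def G0_def by blast
    have "\<bar>t * f u0\<bar> \<le> Cf * \<bar>t\<bar>" "\<bar>t * f w\<bar> \<le> Cf * \<bar>t\<bar>"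
      using Cf(2)[OF u0(1)] Cf(2)[OF w(1)] by (auto simp: abs_mult mult.commute mult_left_mono)
    then have "ln G0 - 2 * (Cf + 1) * \<bar>t\<bar> \<le> ln (gmax \<Omega> (\<rho> t) v) - (t * f w + oe t w)"
      using l1 oeb(2)[OF u0(1)] oeb(2)[OF w(1)] unfolding l_def by (simp add: algebra_simps abs_le_iff)
    then have "exp (ln G0 - 2 * (Cf + 1) * \<bar>t\<bar>) \<le> \<rho>0 w * (w \<bullet> v)" using w(3) by simp
    moreover have "exp (ln G0 - 2 * (Cf + 1) * \<bar>t\<bar>) = G0 * exp (- 2 * (Cf + 1) * \<bar>t\<bar>)"
    proof -
      have "exp (ln G0 - 2 * (Cf + 1) * \<bar>t\<bar>) = exp (ln G0) * exp (- 2 * (Cf + 1) * \<bar>t\<bar>)"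
        by (simp add: exp_add[symmetric] algebra_simps)
      then show ?thesis using G0 by simp
    qed
    ultimately have "m' < \<rho>0 w * (w \<bullet> v)" using elim by simp
    then have "w \<notin> \<Omega>'" using m'(2) by force
    then have "dist w u0 < \<eta>" using w(1) by (auto simp: \<Omega>'_def dist_commute)
    then have fw: "\<bar>f w - f u0\<bar> < \<epsilon> / 2" using \<eta>(2)[OF w(1)] by (simp add: dist_real_def)
    have "\<bar>t * (f w - f u0)\<bar> \<le> (\<epsilon> / 2) * \<bar>t\<bar>"
    proof -
      have "\<bar>t\<bar> * \<bar>f w - f u0\<bar> \<le> \<bar>t\<bar> * (\<epsilon> / 2)" using fw by (intro mult_left_mono) auto
      then show ?thesis by (simp add: abs_mult mult.commute)
    qed
    then have "\<bar>l - t * f u0\<bar> \<le> 3 * (\<epsilon> * \<bar>t\<bar>) / 4"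
    proof -
      assume a: "\<bar>t * (f w - f u0)\<bar> \<le> (\<epsilon> / 2) * \<bar>t\<bar>"
      define E where "E = \<epsilon> * \<bar>t\<bar>"
      have "\<bar>t * (f w - f u0)\<bar> \<le> E / 2" "\<bar>oe t u0\<bar> \<le> E / 4" "\<bar>oe t w\<bar> \<le> E / 4"
        using a oeb(1)[OF u0(1)] oeb(1)[OF w(1)] unfolding E_def by auto
      then have "\<bar>l - t * f u0\<bar> \<le> 3 * E / 4"
        using l1 w(2) unfolding right_diff_distrib by linarith
      then show ?thesis unfolding E_def .
    qed
    then have "\<bar>l / t - f u0\<bar> \<le> 3 * \<epsilon> / 4"
    proof -
      assume a: "\<bar>l - t * f u0\<bar> \<le> 3 * (\<epsilon> * \<bar>t\<bar>) / 4"
      have "l / t - f u0 = (l - t * f u0) / t" using t(1) by (simp add: field_simps)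
      then have "\<bar>l / t - f u0\<bar> = \<bar>l - t * f u0\<bar> / \<bar>t\<bar>" by (simp add: abs_divide)
      also have "\<dots> \<le> (3 * (\<epsilon> * \<bar>t\<bar>) / 4) / \<bar>t\<bar>" using a t(1) by (intro divide_right_mono) auto
      also have "\<dots> = 3 * \<epsilon> / 4" using t(1) by simp
      finally show ?thesis .
    qed
    then show ?case using e unfolding l_def G0_def dist_real_def by simp
  qed
qed

end


context gm begin

definition u0 :: "'a \<Rightarrow> 'a" where
  "u0 v = (SOME u. u \<in> \<Omega> \<and> gmax \<Omega> r v = r u * (u \<bullet> v))"

lemma u0: "u0 v \<in> \<Omega>" "gmax \<Omega> r v = r (u0 v) * (u0 v \<bullet> v)"
proof -
  have "\<exists>u. u \<in> \<Omega> \<and> gmax \<Omega> r v = r u * (u \<bullet> v)" using attains[of v] by blast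
  from someI_ex[OF this] show "u0 v \<in> \<Omega>" "gmax \<Omega> r v = r (u0 v) * (u0 v \<bullet> v)"
    unfolding u0_def by auto
qed

definition U :: "'a \<Rightarrow> 'a" where
  "U v = (if v \<in> Nset then (SOME u. u \<in> \<Omega>) else u0 v)"

lemma U_in: "U v \<in> \<Omega>"
  unfolding U_def using u0(1) some_in_eq ne by auto

lemma U_off: "v \<notin> Nset \<Longrightarrow> U v = u0 v"
  unfolding U_def by simp

lemma argmax_subg: "u \<in> \<Omega> \<Longrightarrow> gmax \<Omega> r v = r u * (u \<bullet> v) \<Longrightarrow> r u *\<^sub>R u \<in> subg v"
  unfolding subg_def using upper by auto

lemma uniq_off_N:
  assumes v: "v \<in> sphere 0 1" "v \<notin> Nset" and u: "u \<in> \<Omega>" "gmax \<Omega> r v = r u * (u \<bullet> v)"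
  shows "u = u0 v"
proof -
  have "r u *\<^sub>R u \<in> subg v" "r (u0 v) *\<^sub>R u0 v \<in> subg v"
    using argmax_subg u u0 by auto
  then have eq: "r u *\<^sub>R u = r (u0 v) *\<^sub>R u0 v" using v unfolding Nset_def by blast
  then have "norm (r u *\<^sub>R u) = norm (r (u0 v) *\<^sub>R u0 v)" by simp
  moreover have "r u > 0" "r (u0 v) > 0" using rpos u(1) u0(1) by auto
  ultimately have "r u = r (u0 v)" using unit[OF u(1)] unit[OF u0(1)] by simp
  then show ?thesis using eq rpos u(1) by (metis less_irrefl scaleR_cancel_left)
qed

lemma U_borel: "U \<in> borel_measurable (restrict_space borel (sphere 0 1))"
proof (rule borel_measurableI)
  fix S :: "'a set" assume S: "open S"
  define C where "C = - S"
  have C: "closed C" using S unfolding C_def by auto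
  define GC where "GC = (sphere 0 1 \<times> (\<Omega> \<inter> C)) \<inter>
     (\<lambda>z. r (snd z) * (snd z \<bullet> fst z) - gmax \<Omega> r (fst z)) -` {0}"
  have cS: "compact (sphere (0::'a) 1 \<times> (\<Omega> \<inter> C))"
    by (intro compact_Times compact_sphere compact_Int_closed cpt C)
  have "continuous_on (sphere 0 1 \<times> (\<Omega> \<inter> C)) (\<lambda>z. r (snd z) * (snd z \<bullet> fst z) - gmax \<Omega> r (fst z))"
  proof -
    have c1: "continuous_on (sphere 0 1 \<times> (\<Omega> \<inter> C)) (\<lambda>z. r (snd z))"
      by (rule continuous_on_compose2[OF cont continuous_on_snd]) auto
    have c2: "continuous_on (sphere 0 1 \<times> (\<Omega> \<inter> C)) (\<lambda>z. gmax \<Omega> r (fst z))"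
      by (rule continuous_on_compose2[OF gmax_cont continuous_on_fst]) auto
    have c3: "continuous_on (sphere 0 1 \<times> (\<Omega> \<inter> C)) (\<lambda>z::'a \<times> 'a. snd z \<bullet> fst z)"
      by (intro continuous_on_inner continuous_on_fst continuous_on_snd continuous_on_id)
    show ?thesis by (intro continuous_on_diff continuous_on_mult c1 c2 c3)
  qed
  then have "closed GC" unfolding GC_def
    by (intro continuous_closed_preimage compact_imp_closed cS) auto
  moreover have "GC = (sphere 0 1 \<times> (\<Omega> \<inter> C)) \<inter> GC" unfolding GC_def by blast
  ultimately have "compact GC" using compact_Int_closed[OF cS] by metis
  then have cl: "closed (fst ` GC)"
    by (intro compact_imp_closed compact_continuous_image continuous_on_fst continuous_on_id)
  have eq: "U -` C \<inter> sphere 0 1 = (Nset \<inter> {v. (SOME u. u \<in> \<Omega>) \<in> C}) \<union> ((sphere 0 1 - Nset) \<inter> fst ` GC)"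
  proof (intro set_eqI iffI)
    fix v assume v: "v \<in> U -` C \<inter> sphere 0 1"
    show "v \<in> (Nset \<inter> {v. (SOME u. u \<in> \<Omega>) \<in> C}) \<union> ((sphere 0 1 - Nset) \<inter> fst ` GC)"
    proof (cases "v \<in> Nset")
      case True then show ?thesis using v unfolding U_def by auto
    next
      case False
      then have "(v, u0 v) \<in> GC" using v u0[of v] unfolding GC_def U_def by auto
      then show ?thesis using False v by force
    qed
  next
    fix v assume v: "v \<in> (Nset \<inter> {v. (SOME u. u \<in> \<Omega>) \<in> C}) \<union> ((sphere 0 1 - Nset) \<inter> fst ` GC)"
    show "v \<in> U -` C \<inter> sphere 0 1"
    proof (cases "v \<in> Nset")
      case True then show ?thesis using v Nset_sphere unfolding U_def by (auto split: if_splits)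
    next
      case False
      then obtain u where u: "(v, u) \<in> GC" using v by force
      then have "u = u0 v" using False uniq_off_N[of v u] unfolding GC_def by auto
      then show ?thesis using u False unfolding GC_def U_def by auto
    qed
  qed
  have "U -` S \<inter> sphere 0 1 = sphere 0 1 - (U -` C \<inter> sphere 0 1)" unfolding C_def by auto
  also have "\<dots> \<in> sets borel"
  proof -
    have b1: "{v::'a. (SOME u. u \<in> \<Omega>) \<in> C} \<in> sets borel" by (cases "(SOME u. u \<in> \<Omega>) \<in> C") auto
    have b2: "fst ` GC \<in> sets borel" using cl by (rule borel_closed)
    have b3: "sphere (0::'a) 1 \<in> sets borel" by (simp add: borel_closed)
    show ?thesis unfolding eq by (intro sets.Diff sets.Un sets.Int b1 b2 b3 Nset_borel)
  qed
  finally show "U -` S \<inter> space (restrict_space borel (sphere 0 1)) \<in> sets (restrict_space borel (sphere 0 1))"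
    by (simp add: sets_restrict_space_iff space_restrict_space)
qed

lemma U_meas: "U \<in> sphere_measure \<rightarrow>\<^sub>M restrict_space borel (sphere (0::'a) 1)"
proof (rule measurable_restrict_space2)
  show "U \<in> space sphere_measure \<rightarrow> sphere 0 1" using U_in sub by auto
  show "U \<in> borel_measurable sphere_measure"
    using U_borel by (simp add: measurable_cong_sets[OF sets_sm refl])
qed

abbreviation M0 where "M0 \<equiv> polar_body (conv_hull_gen \<Omega> r)"

lemma M0_bdd: "bdd_above ((\<lambda>y. y \<bullet> x) ` M0)"
proof -
  obtain m where m: "m > 0" "\<And>y. m * norm y \<le> gmax \<Omega> r y" using gmax_ge_norm by blast
  show ?thesis
  proof (rule bdd_aboveI)
    fix a assume "a \<in> (\<lambda>y. y \<bullet> x) ` M0"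
    then obtain y where y: "gmax \<Omega> r y \<le> 1" "a = y \<bullet> x" unfolding polar_eq by auto
    have "norm y \<le> 1 / m" using m(2)[of y] y(1) m(1) by (simp add: field_simps)
    then have "a \<le> (1 / m) * norm x" using y(2) Cauchy_Schwarz_ineq2[of y x]
      by (smt (verit) mult_right_mono norm_ge_zero)
    then show "a \<le> (1 / m) * norm x" .
  qed
qed

lemma rev_iff:
  assumes v: "v \<in> sphere 0 1" "v \<notin> Nset" and x: "x \<in> sphere 0 1"
  shows "(radial_fun M0 v *\<^sub>R v) \<bullet> x = support_fun M0 x \<longleftrightarrow> x = u0 v"
proof -
  have v0: "v \<noteq> 0" using v by auto
  define G where "G = gmax \<Omega> r v"
  have G: "G > 0" unfolding G_def using gmax_pos v0 by auto
  have rad: "radial_fun M0 v = 1 / G" unfolding G_def using radial_polar[OF v0] .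
  define w where "w = u0 v"
  have w: "w \<in> \<Omega>" "G = r w * (w \<bullet> v)" using u0 unfolding w_def G_def by auto
  have rw: "r w > 0" using rpos w by auto
  have vM: "(1 / G) *\<^sub>R v \<in> M0" unfolding polar_eq using G gmax_homog[of "1 / G" v] by (simp add: G_def)
  have "0 < r w * (w \<bullet> v)" using w G by simp
  then have wv: "w \<bullet> v > 0" using rw by (simp add: zero_less_mult_iff)
  have val: "((1 / G) *\<^sub>R v) \<bullet> w = 1 / r w" using w rw G wv by (simp add: inner_commute field_simps)
  show ?thesis
  proof
    assume "x = u0 v"
    then have xw: "x = w" unfolding w_def .
    have "support_fun M0 w = ((1 / G) *\<^sub>R v) \<bullet> w"
      unfolding support_fun_def
    proof (rule cSup_eq_maximum)
      show "((1 / G) *\<^sub>R v) \<bullet> w \<in> (\<lambda>y. y \<bullet> w) ` M0" using vM by blast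
      fix a assume "a \<in> (\<lambda>y. y \<bullet> w) ` M0"
      then obtain y where y: "gmax \<Omega> r y \<le> 1" "a = y \<bullet> w" unfolding polar_eq by auto
      have "r w * (w \<bullet> y) \<le> 1" using upper[OF w(1), of y] y(1) by linarith
      then have "a \<le> 1 / r w" using rw y(2) by (simp add: inner_commute field_simps)
      then show "a \<le> ((1 / G) *\<^sub>R v) \<bullet> w" using val by simp
    qed
    then show "(radial_fun M0 v *\<^sub>R v) \<bullet> x = support_fun M0 x" unfolding rad xw by simp
  next
    assume eq: "(radial_fun M0 v *\<^sub>R v) \<bullet> x = support_fun M0 x"
    define c where "c = support_fun M0 x"
    have nx: "norm x = 1" using x by simp
    have "(1 / R) *\<^sub>R x \<in> M0"
      unfolding polar_eq using gmax_homog[of "1 / R" x] gmax_bound[of x] R_pos nx by simp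
    then have "((1 / R) *\<^sub>R x) \<bullet> x \<le> c" unfolding c_def support_fun_def
      by (rule cSup_upper[OF imageI M0_bdd])
    moreover have "((1 / R) *\<^sub>R x) \<bullet> x = 1 / R" using nx by (simp add: inner_commute power2_norm_eq_inner[symmetric])
    ultimately have c: "c > 0" using R_pos by (metis less_le_trans zero_less_divide_1_iff)
    have cv: "c = (v \<bullet> x) / G" using eq unfolding rad c_def by (simp add: divide_inverse mult.commute)
    define p where "p = (1 / c) *\<^sub>R x"
    have "p \<in> subg v"
      unfolding subg_def
    proof (intro CollectI conjI allI)
      fix z
      show "p \<bullet> z \<le> gmax \<Omega> r z"
      proof (cases "z = 0")
        case True then show ?thesis using gmax_homog[of 0 z] by (simp add: p_def)
      next
        case False
        then have gz: "gmax \<Omega> r z > 0" using gmax_pos by auto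
        have "(1 / gmax \<Omega> r z) *\<^sub>R z \<in> M0" unfolding polar_eq using gz gmax_homog[of "1 / gmax \<Omega> r z" z] by simp
        then have "((1 / gmax \<Omega> r z) *\<^sub>R z) \<bullet> x \<le> c" unfolding c_def support_fun_def
          by (rule cSup_upper[OF imageI M0_bdd])
        then have "z \<bullet> x \<le> c * gmax \<Omega> r z" using gz by (simp add: field_simps)
        then show ?thesis using c by (simp add: p_def inner_commute field_simps)
      qed
    next
      show "p \<bullet> v = gmax \<Omega> r v" using cv c G unfolding p_def G_def
        by (simp add: inner_commute field_simps)
    qed
    moreover have "r w *\<^sub>R w \<in> subg v" using argmax_subg w by (simp add: G_def)
    ultimately have pe: "p = r w *\<^sub>R w" using v unfolding Nset_def by blast
    then have "x = (c * r w) *\<^sub>R w" using c unfolding p_def by (metis (no_types, lifting) divide_self_if less_irrefl scaleR_one scaleR_scaleR times_divide_eq_left mult.commute)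
    moreover have "norm w = 1" using unit w(1) by simp
    ultimately have "1 = \<bar>c * r w\<bar>" using nx by simp
    then have "c * r w = 1" using c rw by simp
    then show "x = u0 v" using \<open>x = _\<close> unfolding w_def by simp
  qed
qed

lemma rev_gauss_off:
  assumes v: "v \<in> sphere 0 1" "v \<notin> Nset" and eta: "\<eta> \<subseteq> sphere 0 1"
  shows "v \<in> rev_radial_gauss M0 \<eta> \<longleftrightarrow> U v \<in> \<eta>"
proof -
  have "v \<in> rev_radial_gauss M0 \<eta> \<longleftrightarrow> (\<exists>x\<in>\<eta>. (radial_fun M0 v *\<^sub>R v) \<bullet> x = support_fun M0 x)"
    unfolding rev_radial_gauss_def using v by blast
  also have "\<dots> \<longleftrightarrow> (\<exists>x\<in>\<eta>. x = u0 v)"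
  proof
    assume "\<exists>x\<in>\<eta>. (radial_fun M0 v *\<^sub>R v) \<bullet> x = support_fun M0 x"
    then obtain x where "x \<in> \<eta>" "(radial_fun M0 v *\<^sub>R v) \<bullet> x = support_fun M0 x" by blast
    then show "\<exists>x\<in>\<eta>. x = u0 v" using rev_iff[OF v] eta by blast
  next
    assume "\<exists>x\<in>\<eta>. x = u0 v"
    then obtain x where "x \<in> \<eta>" "x = u0 v" by blast
    then show "\<exists>x\<in>\<eta>. (radial_fun M0 v *\<^sub>R v) \<bullet> x = support_fun M0 x" using rev_iff[OF v] eta by blast
  qed
  finally have "v \<in> rev_radial_gauss M0 \<eta> \<longleftrightarrow> (\<exists>x\<in>\<eta>. x = u0 v)" .
  then show ?thesis using U_off[OF v(2)] by auto
qed

end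


lemma bounded_cont_integrable:
  assumes "continuous_on (sphere 0 1) g"
  shows "integrable (sphere_measure :: 'a::euclidean_space measure) (g :: 'a \<Rightarrow> real)"
proof -
  interpret finite_measure "sphere_measure :: 'a measure" by (rule finite_sm)
  obtain B where B: "\<forall>x\<in>g ` sphere 0 1. norm x \<le> B"
    using compact_imp_bounded[OF compact_continuous_image[OF assms compact_sphere]] unfolding bounded_iff by blast
  show ?thesis
  proof (rule integrable_const_bound[where B=B])
    show "AE x in sphere_measure. norm (g x) \<le> B" using B by (intro AE_I2) (auto simp: space_sm)
  qed (rule meas_sm_cont[OF assms])
qed

context gm begin
context
  fixes q j :: real and Q :: "'a set"
  assumes cQ: "continuous_on (sphere 0 1) (radial_fun Q)" and pQ: "\<forall>v\<in>sphere 0 1. radial_fun Q v > 0"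
begin

definition wt :: "'a \<Rightarrow> real" where
  "wt v = radial_fun M0 v powr q * radial_fun Q v powr (real DIM('a) - q - j)"

lemma radM0: "v \<in> sphere 0 1 \<Longrightarrow> radial_fun M0 v = 1 / gmax \<Omega> r v"
proof -
  assume "v \<in> sphere 0 1"
  then have "v \<noteq> 0" by auto
  then show ?thesis by (rule radial_polar)
qed

lemma gpos_s: "v \<in> sphere 0 1 \<Longrightarrow> gmax \<Omega> r v > 0"
proof -
  assume "v \<in> sphere 0 1"
  then have "v \<noteq> 0" by auto
  then show ?thesis by (rule gmax_pos)
qed

lemma wt_cont: "continuous_on (sphere 0 1) wt"
proof -
  have "continuous_on (sphere 0 1) (\<lambda>v. (1 / gmax \<Omega> r v) powr q * radial_fun Q v powr (real DIM('a) - q - j))"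
    using gpos_s pQ
    by (intro continuous_intros continuous_on_subset[OF gmax_cont] cQ) (auto simp del: mem_sphere, fastforce+)
  then show ?thesis unfolding wt_def by (rule continuous_on_cong[THEN iffD1, rotated 2]) (auto simp: radM0)
qed

lemma wt_pos: "v \<in> sphere 0 1 \<Longrightarrow> wt v > 0"
proof -
  assume v: "v \<in> sphere 0 1"
  have "1 / gmax \<Omega> r v > 0" "radial_fun Q v > 0" using gpos_s[OF v] pQ v by auto
  then show ?thesis unfolding wt_def radM0[OF v] by simp
qed

lemma wt_meas: "wt \<in> borel_measurable sphere_measure"
  by (rule meas_sm_cont[OF wt_cont])

definition nu :: "'a measure" where
  "nu = distr (density sphere_measure (\<lambda>v. ennreal (wt v / real DIM('a)))) (restrict_space borel (sphere 0 1)) U"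

lemma U_meas_d: "U \<in> density sphere_measure (\<lambda>v. ennreal (wt v / real DIM('a))) \<rightarrow>\<^sub>M restrict_space borel (sphere (0::'a) 1)"
  using U_meas by (simp add: measurable_cong_sets[OF sets_density refl])

lemma rev_sub: "rev_radial_gauss M \<eta> \<subseteq> sphere 0 1"
  unfolding rev_radial_gauss_def by auto

lemma rev_sets:
  assumes a: "a \<in> sets (restrict_space borel (sphere (0::'a) 1))"
  shows "rev_radial_gauss M0 a \<in> sets (completion sphere_measure)"
    and "AE v in sphere_measure. indicator (rev_radial_gauss M0 a) v = (indicator (U -` a \<inter> sphere 0 1) v :: real)"
proof -
  have asub: "a \<subseteq> sphere 0 1" using a by (simp add: sets_restrict_space_iff)
  have Ua: "U -` a \<inter> sphere 0 1 \<in> sets sphere_measure"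
    using measurable_sets[OF U_meas a] by (simp add: space_sm)
  have eq: "rev_radial_gauss M0 a = ((U -` a \<inter> sphere 0 1) - Nset) \<union> (rev_radial_gauss M0 a \<inter> Nset)"
    using rev_gauss_off[OF _ _ asub] rev_sub[of M0 a] by auto
  show "rev_radial_gauss M0 a \<in> sets (completion sphere_measure)"
    by (subst eq, intro sets.Un sets_completionI_sets sets.Diff Ua Nset_sets_sm null_sets_completion[OF Nset_null]) auto
  show "AE v in sphere_measure. indicator (rev_radial_gauss M0 a) v = (indicator (U -` a \<inter> sphere 0 1) v :: real)"
    using AE_not_in[OF Nset_null]
  proof (rule AE_mp[OF _ AE_I2], intro impI)
    fix v assume v: "v \<in> space sphere_measure" "v \<notin> Nset"
    then have "v \<in> sphere 0 1" by (simp add: space_sm)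
    then show "indicator (rev_radial_gauss M0 a) v = (indicator (U -` a \<inter> sphere 0 1) v :: real)"
      using rev_gauss_off[OF _ v(2) asub] by (simp add: indicator_def)
  qed
qed

lemma curv_eq: "dual_curv_measure q j M0 Q = nu"
proof -
  let ?S = "sets (restrict_space borel (sphere (0::'a) 1))"
  have sp: "space nu = sphere 0 1" unfolding nu_def by (simp add: space_restrict_space)
  have st: "sets nu = ?S" unfolding nu_def by simp
  have "nu = measure_of (sphere 0 1) ?S (emeasure nu)"
    using measure_of_of_measure[of nu] sp st by simp
  also have "\<dots> = measure_of (sphere 0 1) ?S
     (\<lambda>\<eta>. ennreal ((1 / real DIM('a)) *
          (LINT u : rev_radial_gauss M0 \<eta> | completion sphere_measure.
             radial_fun M0 u powr q * radial_fun Q u powr (real DIM('a) - q - j))))"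
  proof (rule measure_of_eq)
    show "?S \<subseteq> Pow (sphere 0 1)"
      using sets.space_closed[of "restrict_space borel (sphere (0::'a) 1)"] by (simp add: space_restrict_space)
    fix a assume "a \<in> sigma_sets (sphere 0 1) ?S"
    then have a: "a \<in> ?S"
      using sigma_algebra.sigma_sets_eq[OF sets.sigma_algebra_axioms[of "restrict_space borel (sphere (0::'a) 1)"]]
      by (simp add: space_restrict_space)
    have Ua: "U -` a \<inter> sphere 0 1 \<in> sets sphere_measure"
      using measurable_sets[OF U_meas a] by (simp add: space_sm)
    have int: "integrable sphere_measure (\<lambda>v. indicator (U -` a \<inter> sphere 0 1) v * (wt v / real DIM('a)))"
    proof -
      have "integrable sphere_measure (\<lambda>v. wt v / real DIM('a))"
        by (intro bounded_cont_integrable continuous_intros wt_cont) auto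
      from integrable_real_mult_indicator[OF Ua this] show ?thesis by (simp add: mult.commute)
    qed
    have "emeasure nu a = emeasure (density sphere_measure (\<lambda>v. ennreal (wt v / real DIM('a)))) (U -` a \<inter> sphere 0 1)"
      unfolding nu_def using a by (simp add: emeasure_distr[OF U_meas_d] space_sm)
    also have "\<dots> = (\<integral>\<^sup>+v. ennreal (indicator (U -` a \<inter> sphere 0 1) v * (wt v / real DIM('a))) \<partial>sphere_measure)"
      using Ua wt_meas by (simp add: emeasure_density) (intro nn_integral_cong, simp add: indicator_def)
    also have "\<dots> = ennreal (\<integral>v. indicator (U -` a \<inter> sphere 0 1) v * (wt v / real DIM('a)) \<partial>sphere_measure)"
      using int wt_pos by (intro nn_integral_eq_integral AE_I2) (auto simp: space_sm indicator_def less_imp_le)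
    also have "(\<integral>v. indicator (U -` a \<inter> sphere 0 1) v * (wt v / real DIM('a)) \<partial>sphere_measure)
        = (1 / real DIM('a)) * (LINT u : rev_radial_gauss M0 a | completion sphere_measure.
             radial_fun M0 u powr q * radial_fun Q u powr (real DIM('a) - q - j))"
    proof -
      have "(LINT u : rev_radial_gauss M0 a | completion sphere_measure.
             radial_fun M0 u powr q * radial_fun Q u powr (real DIM('a) - q - j))
          = (\<integral>u. indicator (rev_radial_gauss M0 a) u * wt u \<partial>completion sphere_measure)"
        unfolding set_lebesgue_integral_def wt_def by simp
      also have "\<dots> = (\<integral>u. indicator (U -` a \<inter> sphere 0 1) u * wt u \<partial>completion sphere_measure)"
      proof (rule integral_cong_AE)
        show "(\<lambda>u. indicator (rev_radial_gauss M0 a) u * wt u) \<in> borel_measurable (completion sphere_measure)"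
          using borel_measurable_indicator[OF rev_sets(1)[OF a]] measurable_completion[OF wt_meas]
          by (rule borel_measurable_times)
        show "(\<lambda>u. indicator (U -` a \<inter> sphere 0 1) u * wt u) \<in> borel_measurable (completion sphere_measure)"
          using borel_measurable_indicator[OF sets_completionI_sets[OF Ua]] measurable_completion[OF wt_meas]
          by (rule borel_measurable_times)
        show "AE u in completion sphere_measure. indicator (rev_radial_gauss M0 a) u * wt u = indicator (U -` a \<inter> sphere 0 1) u * wt u"
          unfolding AE_completion_iff using rev_sets(2)[OF a] by eventually_elim simp
      qed
      also have "\<dots> = (\<integral>u. indicator (U -` a \<inter> sphere 0 1) u * wt u \<partial>sphere_measure)"
        using borel_measurable_indicator[OF Ua] wt_meas by (intro integral_completion borel_measurable_times)
      finally show ?thesis by simp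
    qed
    finally show "emeasure nu a = ennreal ((1 / real DIM('a)) *
          (LINT u : rev_radial_gauss M0 a | completion sphere_measure.
             radial_fun M0 u powr q * radial_fun Q u powr (real DIM('a) - q - j)))" .
  qed
  finally show ?thesis unfolding dual_curv_measure_def by simp
qed

lemma fU_meas:
  assumes cf: "continuous_on \<Omega> (f :: 'a \<Rightarrow> real)"
  shows "(\<lambda>u. indicator \<Omega> u *\<^sub>R f u) \<in> borel_measurable (restrict_space borel (sphere (0::'a) 1))"
    and "(\<lambda>v. f (U v)) \<in> borel_measurable sphere_measure"
proof -
  have "\<Omega> \<in> sets borel" using cpt by (simp add: borel_closed compact_imp_closed)
  then have "(\<lambda>u. indicator \<Omega> u *\<^sub>R f u) \<in> borel_measurable borel"
    by (rule borel_measurable_continuous_on_indicator[OF _ cf])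
  then show g: "(\<lambda>u. indicator \<Omega> u *\<^sub>R f u) \<in> borel_measurable (restrict_space borel (sphere (0::'a) 1))"
    by (rule measurable_restrict_space1)
  have "(\<lambda>v. indicator \<Omega> (U v) *\<^sub>R f (U v)) \<in> borel_measurable sphere_measure"
    using measurable_comp[OF U_meas g] by (simp add: comp_def)
  then show "(\<lambda>v. f (U v)) \<in> borel_measurable sphere_measure"
    using U_in by simp
qed

lemma curv_integral:
  assumes cf: "continuous_on \<Omega> (f :: 'a \<Rightarrow> real)"
  shows "(LINT u : \<Omega> | dual_curv_measure q j M0 Q. f u) = (\<integral>v. (wt v / real DIM('a)) * f (U v) \<partial>sphere_measure)"
proof -
  have "(LINT u : \<Omega> | dual_curv_measure q j M0 Q. f u) = (\<integral>u. indicator \<Omega> u *\<^sub>R f u \<partial>nu)"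
    unfolding curv_eq set_lebesgue_integral_def ..
  also have "\<dots> = (\<integral>v. indicator \<Omega> (U v) *\<^sub>R f (U v) \<partial>density sphere_measure (\<lambda>v. ennreal (wt v / real DIM('a))))"
    unfolding nu_def by (rule integral_distr[OF U_meas_d fU_meas(1)[OF cf]])
  also have "\<dots> = (\<integral>v. f (U v) \<partial>density sphere_measure (\<lambda>v. ennreal (wt v / real DIM('a))))"
    using U_in by simp
  also have "\<dots> = (\<integral>v. (wt v / real DIM('a)) *\<^sub>R f (U v) \<partial>sphere_measure)"
  proof (rule integral_density)
    show "(\<lambda>v. f (U v)) \<in> borel_measurable sphere_measure" by (rule fU_meas(2)[OF cf])
    show "(\<lambda>v. wt v / real DIM('a)) \<in> borel_measurable sphere_measure" using wt_meas by simp
    show "AE x in sphere_measure. 0 \<le> wt x / real DIM('a)"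
      using wt_pos by (intro AE_I2) (auto simp: space_sm less_imp_le)
  qed
  finally show ?thesis by simp
qed

end
end


lemma dominated_at0:
  fixes s :: "real \<Rightarrow> 'a \<Rightarrow> real" and g w :: "'a \<Rightarrow> real"
  assumes g: "g \<in> borel_measurable M" and sm: "eventually (\<lambda>t. s t \<in> borel_measurable M) (at 0)"
    and w: "integrable M w" and lim: "AE x in M. ((\<lambda>t. s t x) \<longlongrightarrow> g x) (at 0)"
    and bd: "eventually (\<lambda>t. AE x in M. \<bar>s t x\<bar> \<le> w x) (at 0)"
  shows "((\<lambda>t. integral\<^sup>L M (s t)) \<longlongrightarrow> integral\<^sup>L M g) (at 0)"
  unfolding tendsto_at_iff_sequentially
proof (intro allI impI)
  fix X :: "nat \<Rightarrow> real" assume X0: "\<forall>i. X i \<in> UNIV - {0}" and X: "X \<longlonglongrightarrow> 0"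
  have fX: "filterlim X (at 0) sequentially"
    using X0 by (intro filterlim_atI[OF X]) auto
  have "eventually (\<lambda>n. s (X n) \<in> borel_measurable M \<and> (AE x in M. \<bar>s (X n) x\<bar> \<le> w x)) sequentially"
    using eventually_conj[OF sm bd] fX by (rule eventually_compose_filterlim)
  then obtain N where N: "\<And>n. N \<le> n \<Longrightarrow> s (X n) \<in> borel_measurable M \<and> (AE x in M. \<bar>s (X n) x\<bar> \<le> w x)"
    by (auto simp: eventually_sequentially)
  have "(\<lambda>n. integral\<^sup>L M (s (X (n + N)))) \<longlonglongrightarrow> integral\<^sup>L M g"
  proof (rule integral_dominated_convergence[OF g _ w])
    show "s (X (n + N)) \<in> borel_measurable M" for n using N[of "n + N"] by simp
    show "AE x in M. norm (s (X (n + N)) x) \<le> w x" for n using N[of "n + N"] by simp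
    show "AE x in M. (\<lambda>n. s (X (n + N)) x) \<longlonglongrightarrow> g x"
      using lim
    proof eventually_elim
      case (elim x)
      then have "(\<lambda>n. s (X n) x) \<longlonglongrightarrow> g x" by (rule filterlim_compose[OF _ fX])
      then show ?case by (rule LIMSEQ_ignore_initial_segment)
    qed
  qed
  then show "((\<lambda>t. integral\<^sup>L M (s t)) \<circ> X) \<longlonglongrightarrow> integral\<^sup>L M g"
    unfolding comp_def by (rule LIMSEQ_offset)
qed

lemma exp_lip: "\<bar>exp a - exp b\<bar> \<le> exp (max a b) * \<bar>a - (b::real)\<bar>"
proof -
  have 1: "exp x - exp y \<le> exp x * (x - y)" for x y :: real
  proof -
    have "1 + (y - x) \<le> exp (y - x)" by (rule exp_ge_add_one_self)
    then have "exp x * (1 + (y - x)) \<le> exp x * exp (y - x)" by (intro mult_left_mono) auto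
    then show ?thesis by (simp add: exp_diff algebra_simps)
  qed
  have "exp a - exp b \<le> exp (max a b) * \<bar>a - b\<bar>"
    using 1[of a b] by (smt (verit) exp_le_cancel_iff max.cobounded1 mult_left_mono mult_nonneg_nonneg exp_ge_zero abs_ge_self abs_ge_zero)
  moreover have "exp b - exp a \<le> exp (max a b) * \<bar>a - b\<bar>"
    using 1[of b a] by (smt (verit) exp_le_cancel_iff max.cobounded2 mult_left_mono mult_nonneg_nonneg exp_ge_zero abs_ge_self abs_ge_zero abs_minus_commute)
  ultimately show ?thesis by linarith
qed



lemma gm_pos_s:
  assumes "gm \<Omega> r" "v \<in> sphere 0 1"
  shows "gmax \<Omega> r v > 0"
proof -
  interpret gm \<Omega> r by fact
  have "v \<noteq> 0" using assms(2) by auto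
  then show ?thesis by (rule gmax_pos)
qed

lemma gm_rad_exp:
  assumes "gm \<Omega> r" "v \<in> sphere 0 1"
  shows "radial_fun (polar_body (conv_hull_gen \<Omega> r)) v powr q = exp (- q * ln (gmax \<Omega> r v))"
proof -
  interpret gm \<Omega> r by fact
  have g: "gmax \<Omega> r v > 0" using gm_pos_s assms by blast
  have "radial_fun (polar_body (conv_hull_gen \<Omega> r)) v = 1 / gmax \<Omega> r v"
  proof -
    have "v \<noteq> 0" using assms(2) by auto
    then show ?thesis by (rule radial_polar)
  qed
  then show ?thesis using g by (simp add: powr_def ln_div)
qed

lemma gm_l_cont:
  assumes "gm \<Omega> r"
  shows "continuous_on (sphere 0 1) (\<lambda>v. ln (gmax \<Omega> r v))"
proof -
  interpret gm \<Omega> r by fact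
  show ?thesis
    using gm_pos_s[OF assms] by (intro continuous_on_ln continuous_on_subset[OF gmax_cont]) force+
qed

context fam begin
context
  fixes q j :: real and Q :: "'a set"
  assumes cQ: "continuous_on (sphere 0 1) (radial_fun Q)" and pQ: "\<forall>v\<in>sphere 0 1. radial_fun Q v > 0"
begin

definition P :: "'a \<Rightarrow> real" where "P v = radial_fun Q v powr (real DIM('a) - q - j)"

lemma P_cont: "continuous_on (sphere 0 1) P"
  unfolding P_def using pQ by (intro continuous_intros cQ) auto

lemma dW_exp:
  assumes "gm \<Omega> r"
  shows "dual_W q j (polar_body (conv_hull_gen \<Omega> r)) Q =
     (1 / real DIM('a)) * (\<integral>v. exp (- q * ln (gmax \<Omega> r v)) * P v \<partial>sphere_measure)"
  unfolding dual_W_def P_def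
  by (intro arg_cong[where f="\<lambda>x. (1 / real DIM('a)) * x"] Bochner_Integration.integral_cong)
     (auto simp: space_sm gm_rad_exp[OF assms])

lemma exp_cont:
  assumes "gm \<Omega> r"
  shows "continuous_on (sphere 0 1) (\<lambda>v. exp (- q * ln (gmax \<Omega> r v)) * P v)"
  by (intro continuous_intros gm_l_cont[OF assms] P_cont)

lemma gm0: "gm \<Omega> \<rho>0" by (rule g0.gm_axioms)

lemma E_int: "gm \<Omega> r \<Longrightarrow> integrable sphere_measure (\<lambda>v. exp (- q * ln (gmax \<Omega> r v)) * P v)"
  by (rule bounded_cont_integrable[OF exp_cont])

lemma dq_eq:
  assumes t: "t \<noteq> 0" "\<bar>t\<bar> < \<delta>"
  shows "(dual_W q j (polar_body (conv_hull_gen \<Omega> (\<rho> t))) Q - dual_W q j (polar_body (conv_hull_gen \<Omega> \<rho>0)) Q) / t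
    = (\<integral>v. (exp (- q * ln (gmax \<Omega> (\<rho> t) v)) * P v - exp (- q * ln (gmax \<Omega> \<rho>0 v)) * P v) / t / real DIM('a) \<partial>sphere_measure)"
proof -
  have gt: "gm \<Omega> (\<rho> t)" using gmt t by auto
  have "(\<integral>v. (exp (- q * ln (gmax \<Omega> (\<rho> t) v)) * P v - exp (- q * ln (gmax \<Omega> \<rho>0 v)) * P v) / t / real DIM('a) \<partial>sphere_measure)
    = ((\<integral>v. exp (- q * ln (gmax \<Omega> (\<rho> t) v)) * P v \<partial>sphere_measure) - (\<integral>v. exp (- q * ln (gmax \<Omega> \<rho>0 v)) * P v \<partial>sphere_measure)) / t / real DIM('a)"
  proof -
    have d: "(\<integral>v. exp (- q * ln (gmax \<Omega> (\<rho> t) v)) * P v - exp (- q * ln (gmax \<Omega> \<rho>0 v)) * P v \<partial>sphere_measure)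
       = (\<integral>v. exp (- q * ln (gmax \<Omega> (\<rho> t) v)) * P v \<partial>sphere_measure) - (\<integral>v. exp (- q * ln (gmax \<Omega> \<rho>0 v)) * P v \<partial>sphere_measure)"
      by (rule Bochner_Integration.integral_diff[OF E_int[OF gt] E_int[OF gm0]])
    show ?thesis by (simp only: integral_divide_zero d)
  qed
  moreover have ar: "((1 / real DIM('a)) * A - (1 / real DIM('a)) * B) / t = (A - B) / t / real DIM('a)" for A B :: real
    by (simp add: field_simps)
  ultimately show ?thesis unfolding dW_exp[OF gt] dW_exp[OF gm0] by (simp only: ar)
qed

definition Lf :: "'a \<Rightarrow> real" where
  "Lf v = exp (- q * ln (gmax \<Omega> \<rho>0 v)) * (- q * f (g0.U v)) * P v / real DIM('a)"

lemma Lf_integral: "(\<integral>v. Lf v \<partial>sphere_measure) = - q * (LINT u : \<Omega> | dual_curv_measure q j (polar_body (conv_hull_gen \<Omega> \<rho>0)) Q. f u)"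
proof -
  have "(LINT u : \<Omega> | dual_curv_measure q j (polar_body (conv_hull_gen \<Omega> \<rho>0)) Q. f u)
     = (\<integral>v. (g0.wt q j Q v / real DIM('a)) * f (g0.U v) \<partial>sphere_measure)"
    by (rule g0.curv_integral[OF cQ pQ cf])
  also have "\<dots> = (\<integral>v. exp (- q * ln (gmax \<Omega> \<rho>0 v)) * P v / real DIM('a) * f (g0.U v) \<partial>sphere_measure)"
    by (intro Bochner_Integration.integral_cong refl)
       (simp add: g0.wt_def[OF cQ pQ] P_def gm_rad_exp[OF gm0] space_sm)
  finally show ?thesis unfolding Lf_def by (simp add: algebra_simps)
qed

definition sq :: "real \<Rightarrow> 'a \<Rightarrow> real" where
  "sq t v = (exp (- q * ln (gmax \<Omega> (\<rho> t) v)) * P v - exp (- q * ln (gmax \<Omega> \<rho>0 v)) * P v) / t / real DIM('a)"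

lemma sq_meas: "\<bar>t\<bar> < \<delta> \<Longrightarrow> sq t \<in> borel_measurable sphere_measure"
proof -
  assume t: "\<bar>t\<bar> < \<delta>"
  have gt: "gm \<Omega> (\<rho> t)" using gmt t by auto
  show ?thesis unfolding sq_def
    by (intro borel_measurable_divide borel_measurable_diff meas_sm_cont[OF exp_cont[OF gt]]
        meas_sm_cont[OF exp_cont[OF gm0]] borel_measurable_const)
qed

lemma Lf_meas: "Lf \<in> borel_measurable sphere_measure"
proof -
  have c: "continuous_on (sphere 0 1) (\<lambda>v. exp (- q * ln (gmax \<Omega> \<rho>0 v)))"
    by (intro continuous_intros gm_l_cont[OF gm0])
  show ?thesis unfolding Lf_def
    by (intro borel_measurable_divide borel_measurable_times meas_sm_cont[OF c] meas_sm_cont[OF P_cont]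
        g0.fU_meas(2)[OF cQ pQ cf] borel_measurable_const)
qed

lemma sq_lim:
  assumes v: "v \<in> sphere 0 1" "v \<notin> g0.Nset"
  shows "((\<lambda>t. sq t v) \<longlongrightarrow> Lf v) (at 0)"
proof -
  have v0: "v \<noteq> 0" using v by auto
  define w where "w = g0.U v"
  have w: "w = g0.u0 v" unfolding w_def using g0.U_off[OF v(2)] .
  have wu: "w \<in> \<Omega>" "gmax \<Omega> \<rho>0 v = \<rho>0 w * (w \<bullet> v)" using g0.u0 unfolding w by auto
  have uniq: "\<And>u. u \<in> \<Omega> \<Longrightarrow> gmax \<Omega> \<rho>0 v = \<rho>0 u * (u \<bullet> v) \<Longrightarrow> u = w"
    using g0.uniq_off_N[OF v] unfolding w by blast
  have ld: "((\<lambda>t. (ln (gmax \<Omega> (\<rho> t) v) - ln (gmax \<Omega> \<rho>0 v)) / t) \<longlongrightarrow> f w) (at 0)"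
    by (rule log_deriv[OF v0 wu uniq])
  define \<phi> where "\<phi> t = (if t = 0 then ln (gmax \<Omega> \<rho>0 v) else ln (gmax \<Omega> (\<rho> t) v))" for t
  have "((\<lambda>y. (\<phi> y - \<phi> 0) / (y - 0)) \<longlongrightarrow> f w) (at 0)"
  proof (subst tendsto_cong)
    show "eventually (\<lambda>y. (\<phi> y - \<phi> 0) / (y - 0) = (ln (gmax \<Omega> (\<rho> y) v) - ln (gmax \<Omega> \<rho>0 v)) / y) (at 0)"
      using ev_delta by eventually_elim (simp add: \<phi>_def)
  qed (rule ld)
  then have d: "(\<phi> has_field_derivative f w) (at 0)" by (simp add: has_field_derivative_iff)
  have "((\<lambda>t. exp (- q * \<phi> t)) has_field_derivative exp (- q * \<phi> 0) * (- q * f w)) (at 0)"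
    by (rule DERIV_fun_exp[OF DERIV_cmult[OF d]])
  then have "((\<lambda>y. (exp (- q * \<phi> y) - exp (- q * \<phi> 0)) / (y - 0)) \<longlongrightarrow> exp (- q * \<phi> 0) * (- q * f w)) (at 0)"
    by (simp add: has_field_derivative_iff)
  then have "((\<lambda>y. (exp (- q * \<phi> y) - exp (- q * \<phi> 0)) / (y - 0) * (P v / real DIM('a)))
      \<longlongrightarrow> exp (- q * \<phi> 0) * (- q * f w) * (P v / real DIM('a))) (at 0)"
    by (rule tendsto_mult_right)
  moreover have "exp (- q * \<phi> 0) * (- q * f w) * (P v / real DIM('a)) = Lf v"
    unfolding Lf_def w_def \<phi>_def by simp
  ultimately have "((\<lambda>y. (exp (- q * \<phi> y) - exp (- q * \<phi> 0)) / (y - 0) * (P v / real DIM('a))) \<longlongrightarrow> Lf v) (at 0)"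
    by simp
  moreover have "eventually (\<lambda>y. (exp (- q * \<phi> y) - exp (- q * \<phi> 0)) / (y - 0) * (P v / real DIM('a)) = sq y v) (at 0)"
    using ev_delta by eventually_elim (simp add: \<phi>_def sq_def field_simps)
  ultimately show ?thesis by (simp add: tendsto_cong)
qed

lemma bounds: "\<exists>W. eventually (\<lambda>t. \<forall>v\<in>sphere 0 1. \<bar>sq t v\<bar> \<le> W) (at 0)"
proof -
  have b1: "bounded ((\<lambda>v. ln (gmax \<Omega> \<rho>0 v)) ` sphere 0 1)"
    by (intro compact_imp_bounded compact_continuous_image gm_l_cont[OF gm0] compact_sphere)
  obtain \<Lambda> where \<Lambda>': "\<forall>x\<in>(\<lambda>v. ln (gmax \<Omega> \<rho>0 v)) ` sphere 0 1. norm x \<le> \<Lambda>"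
    using b1 unfolding bounded_iff by blast
  then have \<Lambda>: "\<And>v. v \<in> sphere 0 1 \<Longrightarrow> \<bar>ln (gmax \<Omega> \<rho>0 v)\<bar> \<le> \<Lambda>" by auto
  have b2: "bounded (P ` sphere 0 1)"
    by (intro compact_imp_bounded compact_continuous_image P_cont compact_sphere)
  obtain Pm where Pm': "\<forall>x\<in>P ` sphere 0 1. norm x \<le> Pm"
    using b2 unfolding bounded_iff by blast
  then have Pm: "\<And>v. v \<in> sphere 0 1 \<Longrightarrow> \<bar>P v\<bar> \<le> Pm" by auto
  define K where "K = \<bar>q\<bar> * (\<Lambda> + Cf + 1)"
  define W where "W = Pm * (exp K * (\<bar>q\<bar> * (Cf + 1))) / real DIM('a)"
  have ev1: "eventually (\<lambda>t::real. \<bar>t\<bar> < 1) (at 0)"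
    unfolding eventually_at by (intro exI[of _ 1]) auto
  have "eventually (\<lambda>t. \<forall>v\<in>sphere 0 1. \<bar>sq t v\<bar> \<le> W) (at 0)"
    using log_bound ev_delta ev1
  proof eventually_elim
    case (elim t)
    show ?case
    proof
      fix v :: 'a assume v: "v \<in> sphere 0 1"
      have v0: "v \<noteq> 0" using v by auto
      define D where "D = ln (gmax \<Omega> (\<rho> t) v) - ln (gmax \<Omega> \<rho>0 v)"
      have D: "\<bar>D\<bar> \<le> (Cf + 1) * \<bar>t\<bar>" using elim v0 unfolding D_def by auto
      have Cf1: "Cf + 1 > 0" using Cf(1) by simp
      have D1: "\<bar>D\<bar> \<le> Cf + 1" using D elim Cf1
        by (smt (verit) mult_left_le_one_le abs_ge_zero mult.commute)
      define a where "a = - q * ln (gmax \<Omega> (\<rho> t) v)"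
      define b where "b = - q * ln (gmax \<Omega> \<rho>0 v)"
      have ab: "\<bar>a - b\<bar> = \<bar>q\<bar> * \<bar>D\<bar>" unfolding a_def b_def D_def by (simp add: algebra_simps abs_mult[symmetric])
      have la: "\<bar>ln (gmax \<Omega> (\<rho> t) v)\<bar> \<le> \<Lambda> + Cf + 1" using \<Lambda>[OF v] D1 unfolding D_def by linarith
      have "a \<le> \<bar>q\<bar> * \<bar>ln (gmax \<Omega> (\<rho> t) v)\<bar>" unfolding a_def by (simp add: abs_mult[symmetric])
      also have "\<dots> \<le> K" unfolding K_def using la by (intro mult_left_mono) auto
      finally have aK: "a \<le> K" .
      have "b \<le> \<bar>q\<bar> * \<bar>ln (gmax \<Omega> \<rho>0 v)\<bar>" unfolding b_def by (simp add: abs_mult[symmetric])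
      also have "\<dots> \<le> K" unfolding K_def using \<Lambda>[OF v] Cf1 by (intro mult_left_mono) auto
      finally have bK: "b \<le> K" .
      have "\<bar>exp a - exp b\<bar> \<le> exp (max a b) * \<bar>a - b\<bar>" by (rule exp_lip)
      also have "\<dots> \<le> exp K * (\<bar>q\<bar> * ((Cf + 1) * \<bar>t\<bar>))"
        unfolding ab using aK bK D by (intro mult_mono mult_left_mono) auto
      finally have e: "\<bar>exp a - exp b\<bar> \<le> exp K * (\<bar>q\<bar> * (Cf + 1)) * \<bar>t\<bar>" by (simp add: algebra_simps)
      have "\<bar>sq t v\<bar> = \<bar>exp a - exp b\<bar> * \<bar>P v\<bar> / \<bar>t\<bar> / real DIM('a)"
        unfolding sq_def a_def b_def by (simp add: abs_mult abs_divide left_diff_distrib[symmetric])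
      also have "\<dots> \<le> (exp K * (\<bar>q\<bar> * (Cf + 1)) * \<bar>t\<bar>) * Pm / \<bar>t\<bar> / real DIM('a)"
        using e Pm[OF v] by (intro divide_right_mono mult_mono) auto
      also have "\<dots> = W" unfolding W_def using elim by (simp add: field_simps)
      finally show "\<bar>sq t v\<bar> \<le> W" .
    qed
  qed
  then show ?thesis by blast
qed

lemma main_lim:
  "((\<lambda>t. (dual_W q j (polar_body (conv_hull_gen \<Omega> (\<rho> t))) Q - dual_W q j (polar_body (conv_hull_gen \<Omega> \<rho>0)) Q) / t)
     \<longlongrightarrow> - q * (LINT u : \<Omega> | dual_curv_measure q j (polar_body (conv_hull_gen \<Omega> \<rho>0)) Q. f u)) (at 0)"
proof -
  obtain W where W: "eventually (\<lambda>t. \<forall>v\<in>sphere 0 1. \<bar>sq t v\<bar> \<le> W) (at 0)" using bounds by blast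
  have "((\<lambda>t. integral\<^sup>L sphere_measure (sq t)) \<longlongrightarrow> integral\<^sup>L sphere_measure Lf) (at 0)"
  proof (rule dominated_at0[where w="\<lambda>_. W"])
    show "Lf \<in> borel_measurable sphere_measure" by (rule Lf_meas)
    show "eventually (\<lambda>t. sq t \<in> borel_measurable sphere_measure) (at 0)"
      using ev_delta by eventually_elim (simp add: sq_meas)
    show "integrable sphere_measure (\<lambda>_. W)"
      using finite_measure.integrable_const[OF finite_sm] by blast
    show "AE x in sphere_measure. ((\<lambda>t. sq t x) \<longlongrightarrow> Lf x) (at 0)"
      using AE_not_in[OF g0.Nset_null]
    proof (rule AE_mp[OF _ AE_I2], intro impI)
      fix v assume "v \<in> space sphere_measure" "v \<notin> g0.Nset"
      then show "((\<lambda>t. sq t v) \<longlongrightarrow> Lf v) (at 0)" using sq_lim by (simp add: space_sm)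
    qed
    show "eventually (\<lambda>t. AE x in sphere_measure. \<bar>sq t x\<bar> \<le> W) (at 0)"
      using W by eventually_elim (intro AE_I2, simp add: space_sm)
  qed
  then have "((\<lambda>t. integral\<^sup>L sphere_measure (sq t)) \<longlongrightarrow> - q * (LINT u : \<Omega> | dual_curv_measure q j (polar_body (conv_hull_gen \<Omega> \<rho>0)) Q. f u)) (at 0)"
    unfolding Lf_integral .
  moreover have "eventually (\<lambda>t. integral\<^sup>L sphere_measure (sq t) =
      (dual_W q j (polar_body (conv_hull_gen \<Omega> (\<rho> t))) Q - dual_W q j (polar_body (conv_hull_gen \<Omega> \<rho>0)) Q) / t) (at 0)"
    using ev_delta
  proof eventually_elim
    case (elim t)
    show ?case unfolding sq_def[abs_def] by (rule sym, rule dq_eq) (use elim in auto)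
  qed
  ultimately show ?thesis by (simp add: tendsto_cong)
qed

end
end

theorem theorem4p1:
  fixes \<Omega> :: "'a::euclidean_space set"
    and \<rho>0 f :: "'a \<Rightarrow> real" and \<rho> :: "real \<Rightarrow> 'a \<Rightarrow> real"
    and q j :: real and Q :: "'a set"
  assumes "closed \<Omega>" and "\<Omega> \<subseteq> sphere 0 1"
    and "\<not> (\<exists>v\<in>sphere 0 1. \<forall>u\<in>\<Omega>. u \<bullet> v \<ge> 0)"
    and "continuous_on \<Omega> \<rho>0" and "\<forall>u\<in>\<Omega>. \<rho>0 u > 0"
    and "continuous_on \<Omega> f"
    and "log_family \<Omega> \<rho>0 f \<rho>"
    and "q \<noteq> 0" and "j \<noteq> real DIM('a)"
    and "star_body_o Q"
  shows "((\<lambda>t. (dual_W q j (polar_body (conv_hull_gen \<Omega> (\<rho> t))) Q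
                 - dual_W q j (polar_body (conv_hull_gen \<Omega> \<rho>0)) Q) / t)
          \<longlongrightarrow> - q * (LINT u : \<Omega> | dual_curv_measure q j (polar_body (conv_hull_gen \<Omega> \<rho>0)) Q. f u))
         (at 0)"
proof -
  have cpt: "compact \<Omega>"
    using assms(1,2) bounded_subset[OF bounded_sphere] by (simp add: compact_eq_bounded_closed) blast
  obtain \<delta> where d: "\<delta> > 0" "\<And>t. \<bar>t\<bar> < \<delta> \<Longrightarrow> continuous_on \<Omega> (\<rho> t) \<and> (\<forall>u\<in>\<Omega>. \<rho> t u > 0)"
      "\<forall>u\<in>\<Omega>. \<rho> 0 u = \<rho>0 u"
      "\<forall>\<epsilon>>0. \<exists>d>0. \<forall>t. t \<noteq> 0 \<and> \<bar>t\<bar> < d \<longrightarrow>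
            (\<forall>u\<in>\<Omega>. \<bar>(ln (\<rho> t u) - ln (\<rho>0 u) - t * f u) / t\<bar> \<le> \<epsilon>)"
    using assms(7) unfolding log_family_def by blast
  interpret fam \<Omega> \<rho>0 f \<rho> \<delta>
    using cpt assms(2,3,4,5,6) d by unfold_locales auto
  have cQ: "continuous_on (sphere 0 1) (radial_fun Q)" and pQ: "\<forall>v\<in>sphere 0 1. radial_fun Q v > 0"
    using assms(10) unfolding star_body_o_def by auto
  show ?thesis by (rule main_lim[OF cQ pQ])
qed

end
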